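(* Let $G$ be a finite group and $p$ a prime such that the Sylow $p$-subgroups of $G$ are cyclic of order $p^r$ with $r\ge1$. For an integer $k$, let $\mathcal P(G,k)$ denote the number of elements of $G$ whose order is divisible by $p^k$. Then, for every $1\le k\le r$, $$\mathcal P(G,k)=\frac{p^{r-k+1}-1}{p^{r-k+1}}\cdot\frac{|G|\,|Z_G(Q)|}{|N_G(Q)|},$$ where $Q$ is any non-trivial $p$-subgroup of $G$ (the ratio $|Z_G(Q)|/|N_G(Q)|$ does not depend on this choice). Furthermore, $\mathcal P(G,0)=|G|$, and $\mathcal P(G,k)=0$ for $k>r$.
   Context: $Z_G(Q)$ denotes the centraliser and $N_G(Q)$ the normaliser of $Q$ in $G$. *)

theory Defs
  imports "HOL-Algebra.Algebra"
begin

definition centralizer_set :: "('a, 'b) monoid_scheme \<Rightarrow> 'a set \<Rightarrow> 'a set" where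
  "centralizer_set G Q = {g \<in> carrier G. \<forall>q\<in>Q. g \<otimes>\<^bsub>G\<^esub> q = q \<otimes>\<^bsub>G\<^esub> g}"

definition sylow_subgroup :: "('a, 'b) monoid_scheme \<Rightarrow> nat \<Rightarrow> 'a set \<Rightarrow> bool" where
  "sylow_subgroup G p P \<longleftrightarrow> subgroup P G \<and> card P = p ^ multiplicity p (order G)"

definition p_subgroup :: "('a, 'b) monoid_scheme \<Rightarrow> nat \<Rightarrow> 'a set \<Rightarrow> bool" where
  "p_subgroup G p Q \<longleftrightarrow> subgroup Q G \<and> (\<exists>n. card Q = p ^ n)"

definition elems_order_div :: "('a, 'b) monoid_scheme \<Rightarrow> nat \<Rightarrow> nat \<Rightarrow> nat" where
  "elems_order_div G p k = card {x \<in> carrier G. p ^ k dvd group.ord G x}"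

end

theory Submission
  imports Defs
begin



definition cj :: "('a, 'b) monoid_scheme \<Rightarrow> 'a \<Rightarrow> 'a set \<Rightarrow> 'a set" where
  "cj H g A = (\<lambda>x. monoid.mult H (monoid.mult H g x) (m_inv H g)) ` A"

context group begin

lemma inv_cancel1[simp]: "g \<in> carrier G \<Longrightarrow> x \<in> carrier G \<Longrightarrow> inv g \<otimes> (g \<otimes> x) = x"
  by (simp add: m_assoc[symmetric])

lemma inv_cancel2[simp]: "g \<in> carrier G \<Longrightarrow> x \<in> carrier G \<Longrightarrow> g \<otimes> (inv g \<otimes> x) = x"
  by (simp add: m_assoc[symmetric])

lemma cj_subset: "g \<in> carrier G \<Longrightarrow> A \<subseteq> carrier G \<Longrightarrow> cj G g A \<subseteq> carrier G"
  unfolding cj_def by auto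

lemma cj_memI: "x \<in> A \<Longrightarrow> g \<otimes> x \<otimes> inv g \<in> cj G g A"
  unfolding cj_def by auto

lemma cj_mult: "g \<in> carrier G \<Longrightarrow> h \<in> carrier G \<Longrightarrow> A \<subseteq> carrier G \<Longrightarrow>
   cj G (g \<otimes> h) A = cj G g (cj G h A)"
  unfolding cj_def image_image
  by (intro image_cong refl) (auto simp: inv_mult_group m_assoc subsetD)

lemma cj_one: "A \<subseteq> carrier G \<Longrightarrow> cj G \<one> A = A"
  unfolding cj_def by (auto simp: subsetD)

lemma cj_inv_cj: "g \<in> carrier G \<Longrightarrow> A \<subseteq> carrier G \<Longrightarrow> cj G (inv g) (cj G g A) = A"
  by (simp add: cj_mult[symmetric] cj_one)

lemma cj_cj_inv: "g \<in> carrier G \<Longrightarrow> A \<subseteq> carrier G \<Longrightarrow> cj G g (cj G (inv g) A) = A"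
  by (simp add: cj_mult[symmetric] cj_one)

lemma cj_mem_iff: "g \<in> carrier G \<Longrightarrow> A \<subseteq> carrier G \<Longrightarrow> y \<in> carrier G \<Longrightarrow>
    y \<in> cj G g A \<longleftrightarrow> inv g \<otimes> y \<otimes> g \<in> A"
proof
  assume g: "g \<in> carrier G" and A: "A \<subseteq> carrier G" and y: "y \<in> carrier G"
  show "y \<in> cj G g A \<Longrightarrow> inv g \<otimes> y \<otimes> g \<in> A"
    using g A unfolding cj_def by (auto simp: m_assoc subsetD)
  assume "inv g \<otimes> y \<otimes> g \<in> A"
  then have "g \<otimes> (inv g \<otimes> y \<otimes> g) \<otimes> inv g \<in> cj G g A" by (rule cj_memI)
  moreover have "g \<otimes> (inv g \<otimes> y \<otimes> g) \<otimes> inv g = y"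
    using g y by (simp add: m_assoc[symmetric]) (simp add: m_assoc)
  ultimately show "y \<in> cj G g A" by simp
qed

lemma card_cj: "g \<in> carrier G \<Longrightarrow> A \<subseteq> carrier G \<Longrightarrow> card (cj G g A) = card A"
  unfolding cj_def by (rule card_image) (auto simp: inj_on_def subsetD)

lemma subgroup_cj: assumes "subgroup A G" "g \<in> carrier G" shows "subgroup (cj G g A) G"
proof -
  interpret A: subgroup A G by fact
  show ?thesis
  proof
    show "cj G g A \<subseteq> carrier G" using cj_subset assms A.subset by blast
    show "\<one> \<in> cj G g A" using cj_memI[OF A.one_closed, of g] assms by simp
    fix x y assume x: "x \<in> cj G g A" and y: "y \<in> cj G g A"
    then obtain a b where a: "a \<in> A" "x = g \<otimes> a \<otimes> inv g" and b: "b \<in> A" "y = g \<otimes> b \<otimes> inv g"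
      unfolding cj_def by auto
    have ac: "a \<in> carrier G" "b \<in> carrier G" using a b A.subset by auto
    have "x \<otimes> y = g \<otimes> (a \<otimes> b) \<otimes> inv g"
      using a b ac assms by (simp add: m_assoc)
    then show "x \<otimes> y \<in> cj G g A" using cj_memI[of "a \<otimes> b" A g] a b by simp
    have "inv x = g \<otimes> inv a \<otimes> inv g"
      using a ac assms by (simp add: inv_mult_group m_assoc)
    then show "inv x \<in> cj G g A" using cj_memI[of "inv a" A g] a by simp
  qed
qed

lemma cj_pow: "g \<in> carrier G \<Longrightarrow> x \<in> carrier G \<Longrightarrow>
    (g \<otimes> x \<otimes> inv g) [^] (n::nat) = g \<otimes> (x [^] n) \<otimes> inv g"
proof (induction n)
  case 0 then show ?case by simp
next
  case (Suc n)
  then show ?case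
    by (simp add: m_assoc)
qed

lemma coset_action: assumes S: "subgroup S G"
  shows "group_action G (rcosets S) (\<lambda>g. \<lambda>A \<in> rcosets S. A #> inv g)"
proof -
  interpret S: subgroup S G by fact
  let ?f = "\<lambda>g. \<lambda>A \<in> rcosets S. A #> inv g"
  have cl: "A #> inv g \<in> rcosets S" if AA: "A \<in> rcosets S" "g \<in> carrier G" for A g
  proof -
    obtain a where a: "a \<in> carrier G" "A = S #> a" using AA unfolding RCOSETS_def by auto
    then have "A #> inv g = S #> (a \<otimes> inv g)" using coset_mult_assoc S.subset AA by simp
    then show ?thesis using a AA unfolding RCOSETS_def by auto
  qed
  have comp: "A #> inv (g \<otimes> h) = (A #> inv h) #> inv g" if "A \<in> rcosets S" "g \<in> carrier G" "h \<in> carrier G" for A g h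
  proof -
    have "A \<subseteq> carrier G" using that S.rcosets_carrier is_group by blast
    then show ?thesis using that by (simp add: coset_mult_assoc inv_mult_group)
  qed
  have bij: "?f g \<in> Bij (rcosets S)" if g: "g \<in> carrier G" for g
  proof -
    have "bij_betw (?f g) (rcosets S) (rcosets S)"
    proof (rule bij_betwI[where g = "?f (inv g)"])
      show "?f g \<in> rcosets S \<rightarrow> rcosets S" using cl g by auto
      show "?f (inv g) \<in> rcosets S \<rightarrow> rcosets S" using cl[of _ "inv g"] g by auto
      fix A assume A: "A \<in> rcosets S"
      then have Ac: "A \<subseteq> carrier G" using S.rcosets_carrier[OF is_group] by blast
      show "?f (inv g) (?f g A) = A" using A g cl Ac by (simp add: coset_mult_assoc coset_mult_one)
      show "?f g (?f (inv g) A) = A" using A g cl cl[of A "inv g"] Ac by (simp add: coset_mult_assoc coset_mult_one)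
    qed
    then show ?thesis unfolding Bij_def by auto
  qed
  have hom: "?f \<in> hom G (BijGroup (rcosets S))"
    unfolding hom_def
  proof (intro CollectI conjI ballI)
    show "?f \<in> carrier G \<rightarrow> carrier (BijGroup (rcosets S))"
      using bij unfolding BijGroup_def by auto
    fix g h assume g: "g \<in> carrier G" and h: "h \<in> carrier G"
    show "?f (g \<otimes> h) = ?f g \<otimes>\<^bsub>BijGroup (rcosets S)\<^esub> ?f h"
      using bij[OF g] bij[OF h] unfolding BijGroup_def
      by (auto simp: compose_def comp g h cl intro!: ext)
  qed
  show ?thesis
    unfolding group_action_def group_hom_def
    using hom by (simp add: group_BijGroup group_hom_axioms.intro is_group)
qed

lemma sylow_contain:
  assumes fin: "finite (carrier G)" and p: "Factorial_Ring.prime p" and S: "subgroup S G" and Q: "subgroup Q G"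
    and cQ: "card Q = p ^ n" and oG: "order G = card S * t" and nd: "\<not> p dvd t"
  shows "\<exists>g\<in>carrier G. Q \<subseteq> cj G g S"
proof -
  interpret S: subgroup S G by fact
  interpret Qs: subgroup Q G by fact
  let ?E = "rcosets S"
  let ?f = "\<lambda>g. \<lambda>A \<in> rcosets S. A #> inv g"
  interpret A: group_action "G\<lparr>carrier := Q\<rparr>" ?E ?f
    using group_action.induced_action[OF coset_action[OF S] Q] .
  have finE: "finite ?E" using fin by (simp add: RCOSETS_def)
  have cS: "card S > 0" using S fin by (simp add: S.finite_imp_card_positive)
  have cE: "card ?E = t"
    using lagrange[OF S] oG cS by (metis mult.commute mult_right_cancel not_gr0)
  have ordQ: "order (G\<lparr>carrier := Q\<rparr>) = p ^ n" using cQ by (simp add: order_def)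
  have "\<exists>A\<in>?E. card (orbit (G\<lparr>carrier := Q\<rparr>) ?f A) = 1"
  proof (rule ccontr)
    assume no: "\<not> ?thesis"
    have pd: "p dvd card Ob" if Ob: "Ob \<in> orbits (G\<lparr>carrier := Q\<rparr>) ?E ?f" for Ob
    proof -
      obtain A where A: "A \<in> ?E" "Ob = orbit (G\<lparr>carrier := Q\<rparr>) ?f A"
        using Ob unfolding orbits_def by auto
      have "card Ob dvd p ^ n"
        using A.orbit_stabilizer_theorem[OF A(1)] A(2) ordQ by (metis dvd_triv_left)
      then obtain i where i: "i \<le> n" "card Ob = p ^ i" using divides_primepow_nat[OF p] by blast
      have "i \<noteq> 0" using no A i by auto
      then show ?thesis using i by simp
    qed
    have "p dvd (\<Sum>Ob\<in>orbits (G\<lparr>carrier := Q\<rparr>) ?E ?f. \<Sum>x\<in>Ob. 1)"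
      by (rule dvd_sum) (simp add: pd)
    then have "p dvd (\<Sum>x\<in>?E. (1::nat))"
      using A.disjoint_sum[OF finE, of "\<lambda>_. 1::nat"] by simp
    then show False using cE nd by simp
  qed
  then obtain A where A: "A \<in> ?E" "card (orbit (G\<lparr>carrier := Q\<rparr>) ?f A) = 1" by blast
  have orbA: "orbit (G\<lparr>carrier := Q\<rparr>) ?f A = {A}"
    using A A.orbit_refl[OF A(1)] by (metis card_1_singletonE singletonD)
  obtain a where a: "a \<in> carrier G" "A = S #> a" using A(1) unfolding RCOSETS_def by auto
  have fixq: "A #> inv q = A" if q: "q \<in> Q" for q
  proof -
    have "?f q A \<in> orbit (G\<lparr>carrier := Q\<rparr>) ?f A" unfolding orbit_def using q by auto
    then show ?thesis using orbA A(1) by simp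
  qed
  show ?thesis
  proof (intro bexI[of _ "inv a"] subsetI)
    show ia: "inv a \<in> carrier G" using a by simp
    fix q assume q: "q \<in> Q"
    have qc: "q \<in> carrier G" using q Qs.subset by auto
    have iq: "inv q \<in> Q" using q by simp
    have "S #> (a \<otimes> q) = S #> a" using fixq[OF iq] a qc S.subset by (simp add: coset_mult_assoc)
    moreover have "a \<otimes> q \<in> S #> (a \<otimes> q)" using a qc S by (simp add: rcos_self)
    ultimately have "a \<otimes> q \<in> S #> a" by simp
    then obtain s where s: "s \<in> S" "a \<otimes> q = s \<otimes> a" unfolding r_coset_def by auto
    have sc: "s \<in> carrier G" using s S.subset by auto
    have "a \<otimes> q \<otimes> inv a = s" using s(2) a sc by (simp add: m_assoc)
    then have "inv (inv a) \<otimes> q \<otimes> inv a \<in> S" using s a by simp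
    then show "q \<in> cj G (inv a) S" using cj_mem_iff[of "inv a" S q] ia S.subset qc by simp
  qed
qed

end



locale cs = group G for G (structure) +
  fixes p r m :: nat
  assumes fin: "finite (carrier G)"
    and pr: "Factorial_Ring.prime p"
    and oG: "order G = p ^ r * m"
    and nd: "\<not> p dvd m"
    and cyc: "\<And>P. subgroup P G \<Longrightarrow> card P = p ^ r \<Longrightarrow> cyclic_group (G\<lparr>carrier := P\<rparr>)"
begin

definition Syl where "Syl P \<longleftrightarrow> subgroup P G \<and> card P = p ^ r"
definition Om :: "nat \<Rightarrow> 'a set \<Rightarrow> 'a set" where "Om j P = {z \<in> P. z [^] (p ^ j) = \<one>}"

lemma p_gt1: "p > 1" using pr prime_gt_1_nat by blast

lemma m_pos: "m > 0"
proof -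
  have "order G > 0" using fin by (simp add: order_gt_0_iff_finite)
  then show ?thesis using oG by (metis gr0I mult_0_right)
qed

lemma Syl_exists: "\<exists>P. Syl P"
  using sylow_thm[OF pr is_group oG fin] unfolding Syl_def by blast

lemma Syl_gen: assumes "Syl P"
  shows "\<exists>a\<in>P. P = {a [^] (i::nat) | i. True} \<and> ord a = p ^ r"
proof -
  have sP: "subgroup P G" and cP: "card P = p ^ r" using assms unfolding Syl_def by auto
  interpret P: subgroup P G by fact
  have gP: "group (G\<lparr>carrier := P\<rparr>)" using subgroup_imp_group[OF sP] .
  have "cyclic_group (G\<lparr>carrier := P\<rparr>)" using cyc sP cP by blast
  then obtain x where x: "x \<in> P" "P = range (\<lambda>n::int. x [^]\<^bsub>G\<lparr>carrier := P\<rparr>\<^esub> n)"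
    using group.cyclic_group[OF gP] by auto
  have xc: "x \<in> carrier G" using x P.subset by auto
  have "P = range (\<lambda>n::int. x [^] n)"
    using x(2) int_pow_consistent[OF sP x(1)] by simp
  then have P1: "P = generate G {x}" using generate_pow[OF xc] by auto
  then have P2: "P = {x [^] (i::nat) | i. True}" using generate_pow_on_finite_carrier[OF fin xc] by auto
  have "ord x = p ^ r" using generate_pow_card[OF xc] P1 cP by simp
  then show ?thesis using x(1) P2 by blast
qed

lemma Syl_sub: "Syl P \<Longrightarrow> P \<subseteq> carrier G"
  unfolding Syl_def using subgroup.subset by blast

lemma Syl_comm: assumes "Syl P" "x \<in> P" "y \<in> P" shows "x \<otimes> y = y \<otimes> x"
proof -
  obtain a where a: "a \<in> P" "P = {a [^] (i::nat) | i. True}" using Syl_gen[OF assms(1)] by blast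
  have ac: "a \<in> carrier G" using a Syl_sub assms(1) by auto
  obtain i j where "x = a [^] (i::nat)" "y = a [^] (j::nat)" using a assms by auto
  then show ?thesis using ac by (metis nat_pow_mult add.commute)
qed

lemma Syl_pe: assumes "Syl P" "z \<in> P" shows "z [^] (p ^ r) = \<one>"
proof -
  obtain a where a: "a \<in> P" "P = {a [^] (i::nat) | i. True}" "ord a = p ^ r" using Syl_gen[OF assms(1)] by blast
  have ac: "a \<in> carrier G" using a Syl_sub assms(1) by auto
  obtain i where "z = a [^] (i::nat)" using a assms by auto
  then have "z [^] (p ^ r) = (a [^] ord a) [^] i" using ac a(3) by (simp add: nat_pow_pow mult.commute)
  then show ?thesis using ac by simp
qed

lemma Om_sub: "Om j P \<subseteq> P" unfolding Om_def by auto

lemma Om_mono: assumes "Syl P" "i \<le> j" shows "Om i P \<subseteq> Om j P"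
proof
  fix z assume z: "z \<in> Om i P"
  then have zc: "z \<in> carrier G" using Syl_sub[OF assms(1)] unfolding Om_def by auto
  have "p ^ j = p ^ i * p ^ (j - i)" using assms(2) by (simp add: power_add[symmetric])
  then have "z [^] (p ^ j) = (z [^] (p ^ i)) [^] (p ^ (j - i))" using zc by (simp add: nat_pow_pow)
  then show "z \<in> Om j P" using z unfolding Om_def by auto
qed

lemma card_Om: assumes "Syl P" "j \<le> r" shows "card (Om j P) = p ^ j"
proof -
  obtain a where a: "a \<in> P" "P = {a [^] (i::nat) | i. True}" "ord a = p ^ r" using Syl_gen[OF assms(1)] by blast
  have ac: "a \<in> carrier G" using a Syl_sub assms(1) by auto
  have pj: "p ^ r = p ^ j * p ^ (r - j)" using assms(2) by (simp add: power_add[symmetric])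
  have eq: "Om j P = (\<lambda>t. a [^] (t * p ^ (r - j))) ` {..<p ^ j}"
  proof (intro equalityI subsetI)
    fix z assume z: "z \<in> Om j P"
    then obtain i where i: "z = a [^] (i::nat)" using a unfolding Om_def by auto
    have "a [^] (i * p ^ j) = \<one>" using z i ac unfolding Om_def by (simp add: nat_pow_pow)
    then have "p ^ r dvd i * p ^ j" using pow_eq_id[OF ac] a(3) by simp
    then have d: "p ^ (r - j) dvd i" using pj p_gt1 by (simp add: mult.commute)
    then obtain t where t: "i = t * p ^ (r - j)" by (metis dvdE mult.commute)
    define t' where "t' = t mod p ^ j"
    have tt: "t = t' + p ^ j * (t div p ^ j)" unfolding t'_def by simp
    have aux: "\<And>a b c d::nat. (a + b * c) * d = a * d + (b * d) * c" by (simp add: algebra_simps)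
    have "i = (t' + p ^ j * (t div p ^ j)) * p ^ (r - j)" using t arg_cong[OF tt, of "\<lambda>x. x * p ^ (r - j)"] by metis
    also have "\<dots> = t' * p ^ (r - j) + (p ^ j * p ^ (r - j)) * (t div p ^ j)"
      by (rule aux)
    finally have "i = t' * p ^ (r - j) + p ^ r * (t div p ^ j)" using pj by simp
    then have "z = a [^] (t' * p ^ (r - j)) \<otimes> (a [^] ord a) [^] (t div p ^ j)"
      using i ac a(3) by (simp add: nat_pow_mult[symmetric] nat_pow_pow)
    then have "z = a [^] (t' * p ^ (r - j))" using ac by simp
    moreover have "t' < p ^ j" unfolding t'_def using p_gt1 by simp
    ultimately show "z \<in> (\<lambda>t. a [^] (t * p ^ (r - j))) ` {..<p ^ j}" by auto
  next
    fix z assume "z \<in> (\<lambda>t. a [^] (t * p ^ (r - j))) ` {..<p ^ j}"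
    then obtain t where t: "z = a [^] (t * p ^ (r - j))" by auto
    have "z \<in> P" using t a by auto
    moreover have "z [^] (p ^ j) = (a [^] ord a) [^] t" using t ac a(3) pj
      by (simp add: nat_pow_pow algebra_simps)
    ultimately show "z \<in> Om j P" unfolding Om_def using ac by simp
  qed
  have "inj_on (\<lambda>t. a [^] (t * p ^ (r - j))) {..<p ^ j}"
  proof (rule inj_onI)
    fix s t assume s: "s \<in> {..<p ^ j}" and t: "t \<in> {..<p ^ j}" and e: "a [^] (s * p ^ (r - j)) = a [^] (t * p ^ (r - j))"
    have ls: "s * p ^ (r - j) < p ^ r" using s pj p_gt1 by simp
    have lt: "t * p ^ (r - j) < p ^ r" using t pj p_gt1 by simp
    have "s * p ^ (r - j) = t * p ^ (r - j)"
      using inj_onD[OF ord_inj[OF ac] e] ls lt a(3) by auto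
    then show "s = t" using p_gt1 by simp
  qed
  then show ?thesis using eq card_image by (metis card_lessThan)
qed

lemma pow_order_sub: assumes "subgroup R G" "z \<in> R" shows "z [^] card R = \<one>"
proof -
  interpret R: group "G\<lparr>carrier := R\<rparr>" using subgroup_imp_group[OF assms(1)] .
  have "z [^]\<^bsub>G\<lparr>carrier := R\<rparr>\<^esub> order (G\<lparr>carrier := R\<rparr>) = \<one>\<^bsub>G\<lparr>carrier := R\<rparr>\<^esub>"
    using R.pow_order_eq_1 assms(2) by simp
  then show ?thesis using nat_pow_consistent[of z "card R" R] by (simp add: order_def)
qed

lemma Syl_finite: "Syl P \<Longrightarrow> finite P" using Syl_sub fin finite_subset by blast

lemma Om_sub_eq: assumes P: "Syl P" and R: "subgroup R G" "R \<subseteq> P" and cR: "card R = p ^ j"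
  shows "R = Om j P" "j \<le> r"
proof -
  have "card R \<le> card P" using card_mono[OF Syl_finite[OF P] R(2)] .
  then have "p ^ j \<le> p ^ r" using cR P unfolding Syl_def by simp
  then show jr: "j \<le> r" using p_gt1 power_le_imp_le_exp by blast
  have "z \<in> Om j P" if z: "z \<in> R" for z
  proof -
    have "z [^] card R = \<one>" using pow_order_sub[OF R(1) z] .
    then show ?thesis using z R(2) cR unfolding Om_def by auto
  qed
  then have sub: "R \<subseteq> Om j P" by blast
  moreover have "finite (Om j P)" using Syl_finite[OF P] Om_sub finite_subset by blast
  moreover have "card R = card (Om j P)" using card_Om[OF P jr] cR by simp
  ultimately show "R = Om j P" using card_subset_eq by blast
qed

lemma Om_subgroup: assumes P: "Syl P" shows "subgroup (Om j P) G"
proof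
  have Pc: "P \<subseteq> carrier G" using Syl_sub[OF P] .
  interpret P: subgroup P G using P unfolding Syl_def by blast
  show "Om j P \<subseteq> carrier G" using Pc Om_sub by blast
  show "\<one> \<in> Om j P" unfolding Om_def by simp
  fix x y assume x: "x \<in> Om j P" and y: "y \<in> Om j P"
  have xc: "x \<in> carrier G" "y \<in> carrier G" using x y Pc unfolding Om_def by auto
  have "(x \<otimes> y) [^] (p ^ j) = x [^] (p ^ j) \<otimes> y [^] (p ^ j)"
    using pow_mult_distrib[OF Syl_comm[OF P] xc] x y unfolding Om_def by auto
  then show "x \<otimes> y \<in> Om j P" using x y unfolding Om_def by auto
  have "(inv x) [^] (p ^ j) = inv (x [^] (p ^ j))" using nat_pow_inv xc by blast
  then show "inv x \<in> Om j P" using x unfolding Om_def by auto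
qed

lemma conj_eq_one: "g \<in> carrier G \<Longrightarrow> x \<in> carrier G \<Longrightarrow> g \<otimes> x \<otimes> inv g = \<one> \<longleftrightarrow> x = \<one>"
proof
  assume g: "g \<in> carrier G" and x: "x \<in> carrier G" and e: "g \<otimes> x \<otimes> inv g = \<one>"
  have "x = inv g \<otimes> (g \<otimes> x \<otimes> inv g) \<otimes> g" using g x by (simp add: m_assoc)
  also have "\<dots> = \<one>" using e g by simp
  finally show "x = \<one>" .
qed simp

lemma Syl_cj: "Syl P \<Longrightarrow> g \<in> carrier G \<Longrightarrow> Syl (cj G g P)"
  unfolding Syl_def using subgroup_cj card_cj[OF _ subgroup.subset] by simp

lemma cj_Om: assumes P: "Syl P" and g: "g \<in> carrier G" shows "cj G g (Om j P) = Om j (cj G g P)"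
proof -
  have Pc: "P \<subseteq> carrier G" using Syl_sub[OF P] .
  show ?thesis
  proof (intro equalityI subsetI)
    fix w assume "w \<in> cj G g (Om j P)"
    then obtain z where z: "z \<in> P" "z [^] (p ^ j) = \<one>" "w = g \<otimes> z \<otimes> inv g"
      unfolding cj_def Om_def by auto
    have zc: "z \<in> carrier G" using z Pc by auto
    have "w [^] (p ^ j) = \<one>" using z zc g cj_pow[OF g zc, of "p ^ j"] by simp
    moreover have "w \<in> cj G g P" using z cj_memI by simp
    ultimately show "w \<in> Om j (cj G g P)" unfolding Om_def by simp
  next
    fix w assume "w \<in> Om j (cj G g P)"
    then obtain z where z: "z \<in> P" "w = g \<otimes> z \<otimes> inv g" "w [^] (p ^ j) = \<one>"
      unfolding cj_def Om_def by auto
    have zc: "z \<in> carrier G" using z Pc by auto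
    have "g \<otimes> z [^] (p ^ j) \<otimes> inv g = \<one>" using z cj_pow[OF g zc, of "p ^ j"] by simp
    then have "z [^] (p ^ j) = \<one>" using conj_eq_one[OF g] zc by simp
    then show "w \<in> cj G g (Om j P)" using z cj_memI[of z "Om j P" g] unfolding Om_def by simp
  qed
qed

lemma index_sub: assumes H: "subgroup H G" and S: "Syl S" and SH: "S \<subseteq> H"
  shows "\<exists>t. card H = card S * t \<and> \<not> p dvd t"
proof -
  interpret GH: group "G\<lparr>carrier := H\<rparr>" using subgroup_imp_group[OF H] .
  have sS: "subgroup S (G\<lparr>carrier := H\<rparr>)" using subgroup_incl S SH H unfolding Syl_def by blast
  have "card (rcosets\<^bsub>G\<lparr>carrier := H\<rparr>\<^esub> S) * card S = card H"
    using GH.lagrange[OF sS] by (simp add: order_def)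
  then obtain t where t: "card H = card S * t" by (metis mult.commute)
  have "card H * card (rcosets H) = order G" using lagrange[OF H] by (simp add: mult.commute)
  then have "p ^ r * t dvd p ^ r * m" using t S oG unfolding Syl_def by (metis dvd_triv_left)
  then have "t dvd m" using p_gt1 by simp
  then have "\<not> p dvd t" using nd dvd_trans by blast
  then show ?thesis using t by blast
qed

lemma contain_sub: assumes H: "subgroup H G" and S: "Syl S" and SH: "S \<subseteq> H"
  and Q: "subgroup Q G" "Q \<subseteq> H" and cQ: "card Q = p ^ n"
  shows "\<exists>h\<in>H. Q \<subseteq> cj G h S"
proof -
  interpret GH: group "G\<lparr>carrier := H\<rparr>" using subgroup_imp_group[OF H] .
  have sS: "subgroup S (G\<lparr>carrier := H\<rparr>)" using subgroup_incl S SH H unfolding Syl_def by blast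
  have sQ: "subgroup Q (G\<lparr>carrier := H\<rparr>)" using subgroup_incl Q H by blast
  obtain t where t: "card H = card S * t" "\<not> p dvd t" using index_sub[OF H S SH] by blast
  have fH: "finite (carrier (G\<lparr>carrier := H\<rparr>))" using fin subgroup.subset[OF H] finite_subset by auto
  obtain h where h: "h \<in> H" "Q \<subseteq> cj (G\<lparr>carrier := H\<rparr>) h S"
    using GH.sylow_contain[OF fH pr sS sQ cQ _ t(2)] t(1) by (auto simp: order_def)
  have "cj (G\<lparr>carrier := H\<rparr>) h S = cj G h S"
    unfolding cj_def using m_inv_consistent[OF H h(1)] by simp
  then show ?thesis using h by auto
qed

lemma pe_contain: assumes H: "subgroup H G" and S: "Syl S" and SH: "S \<subseteq> H"
  and y: "y \<in> H" "y [^] (p ^ r) = \<one>"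
  shows "\<exists>h\<in>H. y \<in> cj G h S"
proof -
  have yc: "y \<in> carrier G" using y H subgroup.subset by blast
  let ?Q = "generate G {y}"
  have sQ: "subgroup ?Q G" using generate_is_subgroup yc by simp
  have QH: "?Q \<subseteq> H" using generate_subgroup_incl[OF _ H] y by simp
  have "ord y dvd p ^ r" using pow_eq_id[OF yc] y by simp
  then obtain i where "ord y = p ^ i" using divides_primepow_nat[OF pr] by blast
  then have cQ: "card ?Q = p ^ i" using generate_pow_card[OF yc] by simp
  obtain h where "h \<in> H" "?Q \<subseteq> cj G h S" using contain_sub[OF H S SH sQ QH cQ] by blast
  moreover have "y \<in> ?Q" by (simp add: generate.incl)
  ultimately show ?thesis by blast
qed

end



lemma pow_dvd_aux: fixes p :: nat
  assumes "Factorial_Ring.prime p" "\<not> p dvd m" "p ^ a dvd p ^ b * m" shows "a \<le> b"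
proof (rule ccontr)
  assume "\<not> a \<le> b"
  then have "Suc b \<le> a" by simp
  then have "p ^ Suc b dvd p ^ a" by (rule le_imp_power_dvd)
  then have "p ^ b * p dvd p ^ b * m" using assms(3) dvd_trans by (metis power_Suc2)
  moreover have "p ^ b \<noteq> 0" using prime_gt_0_nat[OF assms(1)] by simp
  ultimately have "p dvd m" by auto
  then show False using assms(2) by simp
qed

lemma ord_aux: fixes p :: nat
  assumes p: "Factorial_Ring.prime p" and nd: "\<not> p dvd m" and o: "oo dvd p ^ r * m" and k: "k \<ge> 1"
  shows "oo dvd p ^ (k - 1) * m \<longleftrightarrow> \<not> p ^ k dvd oo"
proof
  assume a: "oo dvd p ^ (k - 1) * m"
  show "\<not> p ^ k dvd oo"
  proof
    assume "p ^ k dvd oo"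
    then have "p ^ k dvd p ^ (k - 1) * m" using a dvd_trans by blast
    then have "k \<le> k - 1" using pow_dvd_aux[OF p nd] by blast
    then show False using k by simp
  qed
next
  assume a: "\<not> p ^ k dvd oo"
  have m0: "m \<noteq> 0" using nd by (metis dvd_0_right)
  have "p ^ r * m \<noteq> 0" using m0 prime_gt_0_nat[OF p] by simp
  then have o0: "oo \<noteq> 0" using o by (metis dvd_0_left)
  obtain b where b: "oo = p ^ multiplicity p oo * b" "\<not> p dvd b"
    using multiplicity_decompose'[OF o0] p not_prime_unit by metis
  have "b dvd p ^ r * m" using b(1) o by (metis dvd_mult_right)
  moreover have "coprime b (p ^ r)" using prime_imp_coprime[OF p b(2)]
    by (simp add: coprime_commute)
  ultimately have bm: "b dvd m" using coprime_dvd_mult_right_iff by blast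
  have "multiplicity p oo < k"
  proof (rule ccontr)
    assume "\<not> multiplicity p oo < k"
    then have "k \<le> multiplicity p oo" by simp
    then have "p ^ k dvd oo" by (rule multiplicity_dvd')
    then show False using a by simp
  qed
  then have "p ^ multiplicity p oo dvd p ^ (k - 1)" by (simp add: le_imp_power_dvd)
  then have "p ^ multiplicity p oo * b dvd p ^ (k - 1) * m" using bm by (rule mult_dvd_mono)
  then show "oo dvd p ^ (k - 1) * m" using b(1) by simp
qed

lemma (in group) subgroup_pow_closed: "subgroup H G \<Longrightarrow> x \<in> H \<Longrightarrow> x [^] (n::nat) \<in> H"
  by (induction n) (auto simp: subgroup.one_closed subgroup.m_closed)

context cs begin

definition Ep :: "nat \<times> nat \<times> nat" where
  "Ep = (SOME t. fst t + fst (snd t) = order G * snd (snd t) + 1 \<and> m dvd fst t \<and> p ^ r dvd fst (snd t))"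

lemma Ep_ex: "\<exists>t. fst t + fst (snd t) = order G * snd (snd t) + 1 \<and> m dvd fst t \<and> p ^ r dvd fst (snd t)"
proof -
  have "coprime p m" using prime_imp_coprime[OF pr nd] .
  then have "coprime m (p ^ r)" by (simp add: coprime_commute)
  then have "gcd m (p ^ r) = 1" by simp
  then obtain x y where xy: "m * x = p ^ r * y + 1" using bezout_nat[of m "p ^ r"] m_pos by auto
  have "m * x + p ^ r * y * (m - 1) = order G * y + 1"
  proof -
    have "p ^ r * y * m = p ^ r * y * ((m - 1) + 1)" using m_pos by simp
    also have "\<dots> = p ^ r * y * (m - 1) + p ^ r * y" by (simp only: distrib_left mult_1_right)
    finally have "p ^ r * y + p ^ r * y * (m - 1) = p ^ r * y * m" by simp
    then show ?thesis using xy oG by (simp add: mult.commute mult.left_commute)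
  qed
  then show ?thesis
    by (intro exI[of _ "(m * x, p ^ r * y * (m - 1), y)"]) simp
qed

definition pp where "pp x = x [^] fst Ep"
definition pq where "pq x = x [^] fst (snd Ep)"

lemma Ep_prop: "fst Ep + fst (snd Ep) = order G * snd (snd Ep) + 1" "m dvd fst Ep" "p ^ r dvd fst (snd Ep)"
  using someI_ex[OF Ep_ex] unfolding Ep_def[symmetric] by auto

lemma pow_orderG: "x \<in> carrier G \<Longrightarrow> x [^] (order G * n) = \<one>"
  by (simp add: nat_pow_pow[symmetric] pow_order_eq_1)

lemma pp_closed[simp]: "x \<in> carrier G \<Longrightarrow> pp x \<in> carrier G" unfolding pp_def by simp
lemma pq_closed[simp]: "x \<in> carrier G \<Longrightarrow> pq x \<in> carrier G" unfolding pq_def by simp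

lemma pp_pq: assumes "x \<in> carrier G" shows "pp x \<otimes> pq x = x"
proof -
  have "pp x \<otimes> pq x = x [^] (order G * snd (snd Ep) + 1)"
    unfolding pp_def pq_def using assms Ep_prop(1) by (simp add: nat_pow_mult)
  also have "\<dots> = x" using assms pow_orderG by (simp add: nat_pow_mult[symmetric])
  finally show ?thesis .
qed

lemma pp_pe: assumes "x \<in> carrier G" shows "pp x [^] (p ^ r) = \<one>"
proof -
  obtain k where "fst Ep = m * k" using Ep_prop(2) by blast
  then have "pp x [^] (p ^ r) = x [^] (order G * k)" unfolding pp_def using assms oG
    by (simp add: nat_pow_pow mult_ac)
  then show ?thesis using assms pow_orderG by simp
qed

lemma pq_m: assumes "x \<in> carrier G" shows "pq x [^] m = \<one>"
proof -
  obtain k where "fst (snd Ep) = p ^ r * k" using Ep_prop(3) by blast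
  then have "pq x [^] m = x [^] (order G * k)" unfolding pq_def using assms oG
    by (simp add: nat_pow_pow mult_ac)
  then show ?thesis using assms pow_orderG by simp
qed

lemma pq_of_pe: assumes "y \<in> carrier G" "y [^] (p ^ r) = \<one>" shows "pq y = \<one>"
proof -
  obtain k where "fst (snd Ep) = p ^ r * k" using Ep_prop(3) by blast
  then show ?thesis unfolding pq_def using assms by (simp add: nat_pow_pow[symmetric])
qed

lemma pp_of_pe: assumes "y \<in> carrier G" "y [^] (p ^ r) = \<one>" shows "pp y = y"
  using pp_pq[OF assms(1)] pq_of_pe[OF assms] assms(1) by simp

lemma pp_of_pm: assumes "u \<in> carrier G" "u [^] m = \<one>" shows "pp u = \<one>"
proof -
  obtain k where "fst Ep = m * k" using Ep_prop(2) by blast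
  then show ?thesis unfolding pp_def using assms by (simp add: nat_pow_pow[symmetric])
qed

lemma pq_of_pm: assumes "u \<in> carrier G" "u [^] m = \<one>" shows "pq u = u"
  using pp_pq[OF assms(1)] pp_of_pm[OF assms] assms(1) by simp

lemma pp_comm: "x \<in> carrier G \<Longrightarrow> g \<in> carrier G \<Longrightarrow> x \<otimes> g = g \<otimes> x \<Longrightarrow> pp x \<otimes> g = g \<otimes> pp x"
  unfolding pp_def using group_commutes_pow by blast
lemma pq_comm: "x \<in> carrier G \<Longrightarrow> g \<in> carrier G \<Longrightarrow> x \<otimes> g = g \<otimes> x \<Longrightarrow> pq x \<otimes> g = g \<otimes> pq x"
  unfolding pq_def using group_commutes_pow by blast

lemma pp_pq_comm: "x \<in> carrier G \<Longrightarrow> pp x \<otimes> pq x = pq x \<otimes> pp x"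
  unfolding pp_def pq_def using nat_pow_mult[of x "fst Ep" "fst (snd Ep)"] nat_pow_mult[of x "fst (snd Ep)" "fst Ep"]
  by (simp add: add.commute)

lemma pp_unique: assumes y: "y \<in> carrier G" "y [^] (p ^ r) = \<one>" and u: "u \<in> carrier G" "u [^] m = \<one>"
  and c: "y \<otimes> u = u \<otimes> y"
  shows "pp (y \<otimes> u) = y" "pq (y \<otimes> u) = u"
proof -
  have "pp (y \<otimes> u) = pp y \<otimes> pp u" unfolding pp_def using pow_mult_distrib[OF c y(1) u(1)] by simp
  then show "pp (y \<otimes> u) = y" using pp_of_pe[OF y] pp_of_pm[OF u] y by simp
  have "pq (y \<otimes> u) = pq y \<otimes> pq u" unfolding pq_def using pow_mult_distrib[OF c y(1) u(1)] by simp
  then show "pq (y \<otimes> u) = u" using pq_of_pe[OF y] pq_of_pm[OF u] u by simp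
qed

lemma pp_sub: "subgroup H G \<Longrightarrow> x \<in> H \<Longrightarrow> pp x \<in> H" unfolding pp_def by (rule subgroup_pow_closed)
lemma pq_sub: "subgroup H G \<Longrightarrow> x \<in> H \<Longrightarrow> pq x \<in> H" unfolding pq_def by (rule subgroup_pow_closed)

lemma pp_conj: "g \<in> carrier G \<Longrightarrow> x \<in> carrier G \<Longrightarrow> pp (g \<otimes> x \<otimes> inv g) = g \<otimes> pp x \<otimes> inv g"
  unfolding pp_def by (rule cj_pow)

lemma pe_pow_iff: assumes y: "y \<in> carrier G" "y [^] (p ^ r) = \<one>"
  shows "y [^] (p ^ j * m) = \<one> \<longleftrightarrow> y [^] (p ^ j) = \<one>"
proof
  assume a: "y [^] (p ^ j * m) = \<one>"
  have "ord y dvd p ^ r" using y pow_eq_id by blast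
  then obtain a where oa: "ord y = p ^ a" using divides_primepow_nat[OF pr] by blast
  have "p ^ a dvd p ^ j * m" using a oa pow_eq_id[OF y(1)] by simp
  then have "a \<le> j" using pow_dvd_aux[OF pr nd] by blast
  then have "ord y dvd p ^ j" using oa by (simp add: le_imp_power_dvd)
  then show "y [^] (p ^ j) = \<one>" using pow_eq_id[OF y(1)] by simp
next
  assume "y [^] (p ^ j) = \<one>"
  then show "y [^] (p ^ j * m) = \<one>" using y by (simp add: nat_pow_pow[symmetric])
qed

lemma ord_char: assumes x: "x \<in> carrier G" and k: "k \<ge> 1"
  shows "p ^ k dvd ord x \<longleftrightarrow> pp x [^] (p ^ (k - 1)) \<noteq> \<one>"
proof -
  have "ord x dvd p ^ r * m" using ord_dvd_group_order[OF x] oG by simp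
  then have "p ^ k dvd ord x \<longleftrightarrow> x [^] (p ^ (k - 1) * m) \<noteq> \<one>"
    using ord_aux[OF pr nd _ k] pow_eq_id[OF x] by blast
  moreover have "x [^] (p ^ (k - 1) * m) = pp x [^] (p ^ (k - 1) * m)"
  proof -
    have "x [^] (p ^ (k - 1) * m) = (pp x \<otimes> pq x) [^] (p ^ (k - 1) * m)" using pp_pq[OF x] by simp
    also have "\<dots> = pp x [^] (p ^ (k - 1) * m) \<otimes> pq x [^] (p ^ (k - 1) * m)"
      using pow_mult_distrib[OF pp_pq_comm[OF x]] x by simp
    also have "pq x [^] (p ^ (k - 1) * m) = \<one>" using pq_m[OF x] x
      by (simp add: mult.commute nat_pow_pow[symmetric])
    finally show ?thesis using x by simp
  qed
  ultimately show ?thesis using pe_pow_iff[OF pp_closed[OF x] pp_pe[OF x]] by simp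
qed

end



lemma sum_card_swap:
  assumes "finite A" "finite B"
  shows "(\<Sum>y\<in>A. card {g\<in>B. R y g}) = (\<Sum>g\<in>B. card {y\<in>A. R y g})"
proof -
  have "(\<Sum>y\<in>A. card {g\<in>B. R y g}) = (\<Sum>y\<in>A. \<Sum>g\<in>B. if R y g then 1 else 0)"
    using assms by (simp add: sum.If_cases Int_def)
  also have "\<dots> = (\<Sum>g\<in>B. \<Sum>y\<in>A. if R y g then 1 else 0)" by (rule sum.swap)
  also have "\<dots> = (\<Sum>g\<in>B. card {y\<in>A. R y g})"
    using assms by (simp add: sum.If_cases Int_def)
  finally show ?thesis .
qed

context group begin

lemma centralizer_subgroup: assumes "A \<subseteq> carrier G" shows "subgroup (centralizer_set G A) G"
proof
  show "centralizer_set G A \<subseteq> carrier G" unfolding centralizer_set_def by auto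
  show "\<one> \<in> centralizer_set G A" unfolding centralizer_set_def using assms by auto
  fix x y assume x: "x \<in> centralizer_set G A" and y: "y \<in> centralizer_set G A"
  show "x \<otimes> y \<in> centralizer_set G A" unfolding centralizer_set_def
  proof (intro CollectI conjI ballI)
    show "x \<otimes> y \<in> carrier G" using x y unfolding centralizer_set_def by auto
    fix q assume q: "q \<in> A"
    have qc: "q \<in> carrier G" using q assms by auto
    have xc: "x \<in> carrier G" "y \<in> carrier G" using x y unfolding centralizer_set_def by auto
    have "x \<otimes> y \<otimes> q = x \<otimes> (q \<otimes> y)" using y q xc qc unfolding centralizer_set_def by (simp add: m_assoc)
    also have "\<dots> = q \<otimes> x \<otimes> y" using x q xc qc unfolding centralizer_set_def by (simp add: m_assoc[symmetric])
    finally show "x \<otimes> y \<otimes> q = q \<otimes> (x \<otimes> y)" using xc qc by (simp add: m_assoc)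
  qed
  show "inv x \<in> centralizer_set G A" unfolding centralizer_set_def
  proof (intro CollectI conjI ballI)
    have xc: "x \<in> carrier G" using x unfolding centralizer_set_def by auto
    then show "inv x \<in> carrier G" by simp
    fix q assume q: "q \<in> A"
    have qc: "q \<in> carrier G" using q assms by auto
    have e: "x \<otimes> q = q \<otimes> x" using x q unfolding centralizer_set_def by auto
    have "inv x \<otimes> q = inv x \<otimes> (q \<otimes> x) \<otimes> inv x" using xc qc by (simp add: m_assoc)
    also have "\<dots> = q \<otimes> inv x" using e[symmetric] xc qc by (simp add: m_assoc[symmetric])
    finally show "inv x \<otimes> q = q \<otimes> inv x" .
  qed
qed

lemma centralizer_mem: "g \<in> centralizer_set G A \<longleftrightarrow> g \<in> carrier G \<and> (\<forall>q\<in>A. g \<otimes> q = q \<otimes> g)"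
  unfolding centralizer_set_def by auto

lemma cj_sub_sub: "subgroup H G \<Longrightarrow> h \<in> H \<Longrightarrow> A \<subseteq> H \<Longrightarrow> cj G h A \<subseteq> H"
  unfolding cj_def by (auto simp: subgroup.m_closed subgroup.m_inv_closed subsetD)

end

context cs begin

definition KK where "KK H y = centralizer_set G {y} \<inter> H"
definition NC where "NC H \<longleftrightarrow> (\<forall>P g. Syl P \<longrightarrow> P \<subseteq> H \<longrightarrow> g \<in> H \<longrightarrow> cj G g P = P \<longrightarrow> (\<forall>x\<in>P. g \<otimes> x = x \<otimes> g))"
definition good where "good H \<longleftrightarrow> subgroup H G \<and> (\<exists>S. Syl S \<and> S \<subseteq> H) \<and> NC H"

lemma KK_subgroup: "subgroup H G \<Longrightarrow> y \<in> carrier G \<Longrightarrow> subgroup (KK H y) G"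
  unfolding KK_def using subgroups_Inter_pair centralizer_subgroup by auto

lemma fusion: assumes gH: "good H" and P: "Syl P" "P \<subseteq> H" and y: "y \<in> P" and g: "g \<in> H"
  and z: "g \<otimes> y \<otimes> inv g \<in> P"
  shows "g \<otimes> y \<otimes> inv g = y"
proof -
  have H: "subgroup H G" using gH unfolding good_def by auto
  interpret H: subgroup H G by fact
  have Pc: "P \<subseteq> carrier G" using Syl_sub[OF P(1)] .
  have gc: "g \<in> carrier G" using g H.subset by auto
  have yc: "y \<in> carrier G" using y Pc by auto
  define zz where "zz = g \<otimes> y \<otimes> inv g"
  have zc: "zz \<in> carrier G" using gc yc zz_def by simp
  define K where "K = KK H zz"
  have K: "subgroup K G" unfolding K_def using KK_subgroup[OF H zc] .
  have PK: "P \<subseteq> K" unfolding K_def KK_def centralizer_set_def using P Pc z Syl_comm[OF P(1)] zz_def by auto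
  have cPK: "cj G g P \<subseteq> K"
  proof
    fix w assume "w \<in> cj G g P"
    then obtain a where a: "a \<in> P" "w = g \<otimes> a \<otimes> inv g" unfolding cj_def by auto
    have ac: "a \<in> carrier G" using a Pc by auto
    have "w \<otimes> zz = g \<otimes> (a \<otimes> y) \<otimes> inv g" using a ac yc gc zz_def by (simp add: m_assoc)
    also have "\<dots> = g \<otimes> (y \<otimes> a) \<otimes> inv g" using Syl_comm[OF P(1) a(1) y] by simp
    also have "\<dots> = zz \<otimes> w" using a ac yc gc zz_def by (simp add: m_assoc)
    finally have "w \<otimes> zz = zz \<otimes> w" .
    moreover have "w \<in> H" using a g P(2) by (simp add: H.m_closed H.m_inv_closed subsetD)
    ultimately show "w \<in> K" unfolding K_def KK_def centralizer_set_def using a ac gc by auto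
  qed
  have KH: "K \<subseteq> H" unfolding K_def KK_def by auto
  have sP: "Syl (cj G g P)" using Syl_cj[OF P(1) gc] .
  obtain c where c: "c \<in> K" "cj G g P \<subseteq> cj G c P"
    using contain_sub[OF K P(1) PK _ cPK, of r] sP unfolding Syl_def by auto
  have cc: "c \<in> carrier G" using c K subgroup.subset by blast
  have "cj G g P = cj G c P"
    using c(2) card_cj[OF gc Pc] card_cj[OF cc Pc] Syl_finite[OF Syl_cj[OF P(1) cc]]
    by (simp add: card_subset_eq)
  then have "cj G (inv c \<otimes> g) P = P" using cc gc Pc by (simp add: cj_mult cj_inv_cj)
  moreover have "inv c \<otimes> g \<in> H" using c KH g by (simp add: H.m_closed H.m_inv_closed subsetD)
  ultimately have comm: "(inv c \<otimes> g) \<otimes> y = y \<otimes> (inv c \<otimes> g)"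
    using gH P y unfolding good_def NC_def by blast
  have czz: "c \<otimes> zz = zz \<otimes> c" using c unfolding K_def KK_def centralizer_set_def by auto
  have "y = (inv c \<otimes> g) \<otimes> y \<otimes> inv (inv c \<otimes> g)" using comm cc gc yc by (simp add: m_assoc)
  also have "\<dots> = inv c \<otimes> zz \<otimes> c" using cc gc yc zz_def by (simp add: m_assoc inv_mult_group)
  also have "\<dots> = zz" using czz[symmetric] cc zc by (simp add: m_assoc)
  finally show ?thesis unfolding zz_def by simp
qed

lemma good_sub: "good H \<Longrightarrow> subgroup H G" unfolding good_def by auto

lemma finite_sub: "subgroup H G \<Longrightarrow> finite H" using fin subgroup.subset finite_subset by blast

lemma conj_fiber: assumes gH: "good H" and P: "Syl P" "P \<subseteq> H" and y: "y \<in> H" "y [^] (p ^ r) = \<one>"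
  shows "card {g\<in>H. inv g \<otimes> y \<otimes> g \<in> P} = card (KK H y)"
proof -
  have H: "subgroup H G" using gH unfolding good_def by auto
  interpret H: subgroup H G by fact
  have Pc: "P \<subseteq> carrier G" using Syl_sub[OF P(1)] .
  have yc: "y \<in> carrier G" using y H.subset by auto
  obtain h where h: "h \<in> H" "y \<in> cj G h P" using pe_contain[OF H P(1) P(2) y] by blast
  have hc: "h \<in> carrier G" using h H.subset by auto
  have z0: "inv h \<otimes> y \<otimes> h \<in> P" using cj_mem_iff[OF hc Pc yc] h by simp
  have eq: "{g\<in>H. inv g \<otimes> y \<otimes> g \<in> P} = (\<lambda>c. c \<otimes> h) ` (KK H y)"
  proof (intro equalityI subsetI)
    fix g assume "g \<in> {g\<in>H. inv g \<otimes> y \<otimes> g \<in> P}"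
    then have g: "g \<in> H" "inv g \<otimes> y \<otimes> g \<in> P" by auto
    have gc: "g \<in> carrier G" using g H.subset by auto
    define k where "k = inv g \<otimes> h"
    have kH: "k \<in> H" unfolding k_def using g h by (simp add: H.m_closed H.m_inv_closed)
    have kc: "k \<in> carrier G" using kH H.subset by auto
    have "k \<otimes> (inv h \<otimes> y \<otimes> h) \<otimes> inv k = inv g \<otimes> y \<otimes> g"
      unfolding k_def using gc hc yc by (simp add: m_assoc inv_mult_group)
    then have e: "inv g \<otimes> y \<otimes> g = inv h \<otimes> y \<otimes> h"
      using fusion[OF gH P z0 kH] g(2) by simp
    define c where "c = g \<otimes> inv h"
    have cH: "c \<in> H" unfolding c_def using g h by (simp add: H.m_closed H.m_inv_closed)
    have cc: "c \<in> carrier G" using cH H.subset by auto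
    have "c \<otimes> y = g \<otimes> (inv h \<otimes> y \<otimes> h) \<otimes> inv h" unfolding c_def using gc hc yc by (simp add: m_assoc)
    also have "\<dots> = g \<otimes> (inv g \<otimes> y \<otimes> g) \<otimes> inv h" using e by simp
    also have "\<dots> = y \<otimes> c" unfolding c_def using gc hc yc by (simp add: m_assoc)
    finally have "c \<otimes> y = y \<otimes> c" .
    then have "c \<in> KK H y" unfolding KK_def centralizer_set_def using cH cc by auto
    moreover have "g = c \<otimes> h" unfolding c_def using gc hc by (simp add: m_assoc)
    ultimately show "g \<in> (\<lambda>c. c \<otimes> h) ` (KK H y)" by blast
  next
    fix g assume "g \<in> (\<lambda>c. c \<otimes> h) ` (KK H y)"
    then obtain c where c: "c \<in> KK H y" "g = c \<otimes> h" by auto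
    have cH: "c \<in> H" and cy: "c \<otimes> y = y \<otimes> c" and cc: "c \<in> carrier G"
      using c unfolding KK_def centralizer_set_def by auto
    have "inv g \<otimes> y \<otimes> g = inv h \<otimes> (inv c \<otimes> (y \<otimes> c)) \<otimes> h"
      using c(2) cc hc yc by (simp add: m_assoc inv_mult_group)
    also have "inv c \<otimes> (y \<otimes> c) = y" using cy[symmetric] cc yc by simp
    finally have "inv g \<otimes> y \<otimes> g \<in> P" using z0 by simp
    moreover have "g \<in> H" using c cH h by (simp add: H.m_closed)
    ultimately show "g \<in> {g\<in>H. inv g \<otimes> y \<otimes> g \<in> P}" by simp
  qed
  have "inj_on (\<lambda>c. c \<otimes> h) (KK H y)"
  proof (rule inj_onI)
    fix a b assume a: "a \<in> KK H y" and b: "b \<in> KK H y" and e: "a \<otimes> h = b \<otimes> h"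
    have "a \<in> carrier G" "b \<in> carrier G" using a b unfolding KK_def centralizer_set_def by auto
    then show "a = b" using e hc right_cancel by blast
  qed
  then have "card ((\<lambda>c. c \<otimes> h) ` KK H y) = card (KK H y)" by (rule card_image)
  then show ?thesis using eq by simp
qed

lemma class_sum: assumes gH: "good H" and P: "Syl P" "P \<subseteq> H"
  and inv: "\<And>g y. g \<in> carrier G \<Longrightarrow> y \<in> carrier G \<Longrightarrow> \<Phi> (g \<otimes> y \<otimes> inv g) = \<Phi> y"
  shows "(\<Sum>y\<in>{y\<in>H. y [^] (p ^ r) = \<one> \<and> \<Phi> y}. card (KK H y)) = card H * card {z\<in>P. \<Phi> z}"
proof -
  have H: "subgroup H G" using gH unfolding good_def by auto
  interpret H: subgroup H G by fact
  have Pc: "P \<subseteq> carrier G" using Syl_sub[OF P(1)] .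
  let ?Y = "{y\<in>H. y [^] (p ^ r) = \<one> \<and> \<Phi> y}"
  have fH: "finite H" using finite_sub[OF H] .
  have fY: "finite ?Y" using fH by simp
  have "(\<Sum>y\<in>?Y. card (KK H y)) = (\<Sum>y\<in>?Y. card {g\<in>H. inv g \<otimes> y \<otimes> g \<in> P})"
    using conj_fiber[OF gH P] by (intro sum.cong) auto
  also have "\<dots> = (\<Sum>g\<in>H. card {y\<in>?Y. inv g \<otimes> y \<otimes> g \<in> P})"
    by (rule sum_card_swap[OF fY fH])
  also have "\<dots> = (\<Sum>g\<in>H. card {z\<in>P. \<Phi> z})"
  proof (rule sum.cong[OF refl])
    fix g assume g: "g \<in> H"
    have gc: "g \<in> carrier G" using g H.subset by auto
    have "{y\<in>?Y. inv g \<otimes> y \<otimes> g \<in> P} = cj G g {z\<in>P. \<Phi> z}"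
    proof (intro equalityI subsetI)
      fix y assume "y \<in> {y\<in>?Y. inv g \<otimes> y \<otimes> g \<in> P}"
      then have y: "y \<in> H" "\<Phi> y" "inv g \<otimes> y \<otimes> g \<in> P" by auto
      have yc: "y \<in> carrier G" using y H.subset by auto
      have "\<Phi> (inv g \<otimes> y \<otimes> inv (inv g)) = \<Phi> y" using inv[of "inv g" y] gc yc by simp
      then have "inv g \<otimes> y \<otimes> g \<in> {z\<in>P. \<Phi> z}" using y gc by simp
      then show "y \<in> cj G g {z\<in>P. \<Phi> z}" using cj_mem_iff[OF gc _ yc, of "{z\<in>P. \<Phi> z}"] Pc by auto
    next
      fix y assume "y \<in> cj G g {z\<in>P. \<Phi> z}"
      then obtain z where z: "z \<in> P" "\<Phi> z" "y = g \<otimes> z \<otimes> inv g" unfolding cj_def by auto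
      have zc: "z \<in> carrier G" using z Pc by auto
      have "y \<in> H" using z g P(2) by (simp add: H.m_closed H.m_inv_closed subsetD)
      moreover have "y [^] (p ^ r) = \<one>" using z cj_pow[OF gc zc] Syl_pe[OF P(1) z(1)] gc by simp
      moreover have "\<Phi> y" using z inv gc zc by simp
      moreover have "inv g \<otimes> y \<otimes> g \<in> P" using z gc zc by (simp add: m_assoc)
      ultimately show "y \<in> {y\<in>?Y. inv g \<otimes> y \<otimes> g \<in> P}" by simp
    qed
    then show "card {y\<in>?Y. inv g \<otimes> y \<otimes> g \<in> P} = card {z\<in>P. \<Phi> z}"
      using card_cj[OF gc, of "{z\<in>P. \<Phi> z}"] Pc by auto
  qed
  also have "\<dots> = card H * card {z\<in>P. \<Phi> z}" by simp
  finally show ?thesis .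
qed

lemma decomp: assumes H: "subgroup H G"
  shows "card {x\<in>H. \<Psi> (pp x)} = (\<Sum>y\<in>{y\<in>H. y [^] (p ^ r) = \<one> \<and> \<Psi> y}. card {u\<in>KK H y. u [^] m = \<one>})"
proof -
  interpret H: subgroup H G by fact
  let ?Y = "{y\<in>H. y [^] (p ^ r) = \<one> \<and> \<Psi> y}"
  have fH: "finite H" using finite_sub[OF H] .
  have fY: "finite ?Y" using fH by simp
  have fib: "card {x\<in>H. pp x = y} = card {u\<in>KK H y. u [^] m = \<one>}" if y: "y \<in> ?Y" for y
  proof -
    have yc: "y \<in> carrier G" using y H.subset by auto
    have eq: "{x\<in>H. pp x = y} = (\<lambda>u. y \<otimes> u) ` {u\<in>KK H y. u [^] m = \<one>}"
    proof (intro equalityI subsetI)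
      fix x assume "x \<in> {x\<in>H. pp x = y}"
      then have x: "x \<in> H" "pp x = y" by auto
      have xc: "x \<in> carrier G" using x H.subset by auto
      have "pq x \<in> KK H y" unfolding KK_def centralizer_set_def
        using pq_sub[OF H x(1)] pp_pq_comm[OF xc] x xc by auto
      moreover have "pq x [^] m = \<one>" using pq_m[OF xc] .
      moreover have "x = y \<otimes> pq x" using pp_pq[OF xc] x by simp
      ultimately show "x \<in> (\<lambda>u. y \<otimes> u) ` {u\<in>KK H y. u [^] m = \<one>}" by blast
    next
      fix x assume "x \<in> (\<lambda>u. y \<otimes> u) ` {u\<in>KK H y. u [^] m = \<one>}"
      then obtain u where u: "u \<in> KK H y" "u [^] m = \<one>" "x = y \<otimes> u" by auto
      have uH: "u \<in> H" and uc: "u \<in> carrier G" and uy: "u \<otimes> y = y \<otimes> u"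
        using u unfolding KK_def centralizer_set_def by auto
      have "pp x = y" using pp_unique(1)[OF yc _ uc u(2) uy[symmetric]] y u(3) by simp
      moreover have "x \<in> H" using u uH y by (simp add: H.m_closed)
      ultimately show "x \<in> {x\<in>H. pp x = y}" by simp
    qed
    have "inj_on (\<lambda>u. y \<otimes> u) {u\<in>KK H y. u [^] m = \<one>}"
    proof (rule inj_onI)
      fix a b assume a: "a \<in> {u\<in>KK H y. u [^] m = \<one>}" and b: "b \<in> {u\<in>KK H y. u [^] m = \<one>}"
        and e: "y \<otimes> a = y \<otimes> b"
      have "a \<in> carrier G" "b \<in> carrier G" using a b unfolding KK_def centralizer_set_def by auto
      then show "a = b" using e yc l_cancel by blast
    qed
    then have "card ((\<lambda>u. y \<otimes> u) ` {u\<in>KK H y. u [^] m = \<one>}) = card {u\<in>KK H y. u [^] m = \<one>}"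
      by (rule card_image)
    then show ?thesis using eq by simp
  qed
  have "(\<Sum>y\<in>?Y. card {u\<in>KK H y. u [^] m = \<one>}) = (\<Sum>y\<in>?Y. card {x\<in>H. pp x = y})"
    by (rule sum.cong[OF refl]) (simp add: fib)
  also have "\<dots> = (\<Sum>x\<in>H. card {y\<in>?Y. pp x = y})" by (rule sum_card_swap[OF fY fH])
  also have "\<dots> = (\<Sum>x\<in>H. if \<Psi> (pp x) then 1 else 0)"
  proof (rule sum.cong[OF refl])
    fix x assume x: "x \<in> H"
    have xc: "x \<in> carrier G" using x H.subset by auto
    have "pp x \<in> H" "pp x [^] (p ^ r) = \<one>" using pp_sub[OF H x] pp_pe[OF xc] by auto
    then have "{y\<in>?Y. pp x = y} = (if \<Psi> (pp x) then {pp x} else {})" by auto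
    then show "card {y\<in>?Y. pp x = y} = (if \<Psi> (pp x) then 1 else 0)" by simp
  qed
  also have "\<dots> = card {x\<in>H. \<Psi> (pp x)}" using fH by (simp add: sum.If_cases Int_def)
  finally show ?thesis by simp
qed

end



context cs begin

lemma good_KK: assumes gH: "good H" and y: "y \<in> H" "y [^] (p ^ r) = \<one>" shows "good (KK H y)"
proof -
  have H: "subgroup H G" using gH unfolding good_def by auto
  interpret H: subgroup H G by fact
  obtain S where S: "Syl S" "S \<subseteq> H" using gH unfolding good_def by auto
  have yc: "y \<in> carrier G" using y H.subset by auto
  obtain h where h: "h \<in> H" "y \<in> cj G h S" using pe_contain[OF H S y] by blast
  have hc: "h \<in> carrier G" using h H.subset by auto
  have T: "Syl (cj G h S)" using Syl_cj[OF S(1) hc] .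
  have TH: "cj G h S \<subseteq> H" using cj_sub_sub[OF H h(1) S(2)] .
  have "cj G h S \<subseteq> KK H y"
    unfolding KK_def centralizer_set_def using TH Syl_sub[OF T] Syl_comm[OF T _ h(2)] by auto
  moreover have "subgroup (KK H y) G" using KK_subgroup[OF H yc] .
  moreover have "NC (KK H y)" using gH unfolding good_def NC_def KK_def by blast
  ultimately show ?thesis unfolding good_def using T by blast
qed

lemma lemmaA: "good H \<Longrightarrow> card {u\<in>H. u [^] m = \<one>} * p ^ r = card H"
proof (induction "card H" arbitrary: H rule: less_induct)
  case less
  have gH: "good H" by fact
  have H: "subgroup H G" using gH unfolding good_def by auto
  interpret H: subgroup H G by fact
  obtain S where S: "Syl S" "S \<subseteq> H" using gH unfolding good_def by auto
  have fH: "finite H" using finite_sub[OF H] .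
  define Y where "Y = {y\<in>H. y [^] (p ^ r) = \<one>}"
  have fY: "finite Y" unfolding Y_def using fH by simp
  define s where "s K = card {u\<in>K. u [^] m = \<one>}" for K
  define Z where "Z = {y\<in>Y. KK H y = H}"
  have ZY: "Z \<subseteq> Y" unfolding Z_def by auto
  have fZ: "finite Z" using fY ZY finite_subset by blast
  have oneZ: "\<one> \<in> Z" unfolding Z_def Y_def KK_def centralizer_set_def using H.subset by auto
  have cZ: "card Z > 0" using oneZ fZ card_gt_0_iff by blast
  have IH: "s (KK H y) * p ^ r = card (KK H y)" if y: "y \<in> Y - Z" for y
  proof -
    have y1: "y \<in> H" "y [^] (p ^ r) = \<one>" using y unfolding Y_def by auto
    have "KK H y \<subset> H" using y unfolding Z_def KK_def by auto
    then have "card (KK H y) < card H" using fH psubset_card_mono by blast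
    then show ?thesis unfolding s_def using less.hyps good_KK[OF gH y1] by blast
  qed
  have eq1: "card H = (\<Sum>y\<in>Y. s (KK H y))"
    using decomp[OF H, of "\<lambda>_. True"] unfolding Y_def s_def by simp
  have eq2: "(\<Sum>y\<in>Y. card (KK H y)) = card H * p ^ r"
    using class_sum[OF gH S, of "\<lambda>_. True"] S(1) unfolding Y_def Syl_def by simp
  have "card H * p ^ r = (\<Sum>y\<in>Y. s (KK H y) * p ^ r)" using eq1 by (simp add: sum_distrib_right)
  also have "\<dots> = (\<Sum>y\<in>Y - Z. s (KK H y) * p ^ r) + (\<Sum>y\<in>Z. s (KK H y) * p ^ r)"
    using sum.subset_diff[OF ZY fY] by simp
  also have "(\<Sum>y\<in>Y - Z. s (KK H y) * p ^ r) = (\<Sum>y\<in>Y - Z. card (KK H y))"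
    using IH by (intro sum.cong) auto
  also have "(\<Sum>y\<in>Z. s (KK H y) * p ^ r) = card Z * (s H * p ^ r)"
    unfolding Z_def by simp
  finally have A: "card H * p ^ r = (\<Sum>y\<in>Y - Z. card (KK H y)) + card Z * (s H * p ^ r)" .
  have "card H * p ^ r = (\<Sum>y\<in>Y - Z. card (KK H y)) + (\<Sum>y\<in>Z. card (KK H y))"
    using eq2 sum.subset_diff[OF ZY fY, of "\<lambda>y. card (KK H y)"] by simp
  also have "(\<Sum>y\<in>Z. card (KK H y)) = card Z * card H" unfolding Z_def by simp
  finally have B: "card H * p ^ r = (\<Sum>y\<in>Y - Z. card (KK H y)) + card Z * card H" .
  have "card Z * (s H * p ^ r) = card Z * card H" using A B by linarith
  then show ?case using cZ unfolding s_def by simp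
qed

lemma lemmaA2: assumes gH: "good H" and k: "k \<ge> 1" "k - 1 \<le> r"
  shows "card {x\<in>H. pp x [^] (p ^ (k - 1)) \<noteq> \<one>} * p ^ r = card H * (p ^ r - p ^ (k - 1))"
proof -
  have H: "subgroup H G" using gH unfolding good_def by auto
  interpret H: subgroup H G by fact
  obtain S where S: "Syl S" "S \<subseteq> H" using gH unfolding good_def by auto
  define Y where "Y = {y\<in>H. y [^] (p ^ r) = \<one> \<and> y [^] (p ^ (k - 1)) \<noteq> \<one>}"
  have "card {x\<in>H. pp x [^] (p ^ (k - 1)) \<noteq> \<one>} * p ^ r
      = (\<Sum>y\<in>Y. card {u\<in>KK H y. u [^] m = \<one>}) * p ^ r"
    using decomp[OF H, of "\<lambda>y. y [^] (p ^ (k - 1)) \<noteq> \<one>"] unfolding Y_def by simp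
  also have "\<dots> = (\<Sum>y\<in>Y. card {u\<in>KK H y. u [^] m = \<one>} * p ^ r)" by (simp add: sum_distrib_right)
  also have "\<dots> = (\<Sum>y\<in>Y. card (KK H y))"
  proof (rule sum.cong[OF refl])
    fix y assume "y \<in> Y"
    then have "good (KK H y)" using good_KK[OF gH] unfolding Y_def by auto
    then show "card {u\<in>KK H y. u [^] m = \<one>} * p ^ r = card (KK H y)" by (rule lemmaA)
  qed
  also have "\<dots> = card H * card {z\<in>S. z [^] (p ^ (k - 1)) \<noteq> \<one>}"
  proof -
    have inv: "(g \<otimes> y \<otimes> inv g) [^] (p ^ (k - 1)) \<noteq> \<one> \<longleftrightarrow> y [^] (p ^ (k - 1)) \<noteq> \<one>"
      if "g \<in> carrier G" "y \<in> carrier G" for g y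
      using cj_pow[OF that] conj_eq_one[OF that(1)] that by simp
    show ?thesis using class_sum[OF gH S, of "\<lambda>y. y [^] (p ^ (k - 1)) \<noteq> \<one>"] inv unfolding Y_def by simp
  qed
  also have "card {z\<in>S. z [^] (p ^ (k - 1)) \<noteq> \<one>} = p ^ r - p ^ (k - 1)"
  proof -
    have "{z\<in>S. z [^] (p ^ (k - 1)) \<noteq> \<one>} = S - Om (k - 1) S" unfolding Om_def by auto
    moreover have "card (S - Om (k - 1) S) = card S - card (Om (k - 1) S)"
      using card_Diff_subset[OF finite_subset[OF Om_sub Syl_finite[OF S(1)]] Om_sub] .
    ultimately show ?thesis using card_Om[OF S(1) k(2)] S(1) unfolding Syl_def by simp
  qed
  finally show ?thesis .
qed

end



context cs begin

definition NN where "NN P = {n \<in> carrier G. cj G n P = P}"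

lemma NN_subgroup: assumes "P \<subseteq> carrier G" shows "subgroup (NN P) G"
proof
  show "NN P \<subseteq> carrier G" unfolding NN_def by auto
  show "\<one> \<in> NN P" unfolding NN_def using cj_one assms by simp
  fix x y assume x: "x \<in> NN P" and y: "y \<in> NN P"
  then show "x \<otimes> y \<in> NN P" unfolding NN_def using cj_mult assms by auto
  show "inv x \<in> NN P" using x cj_inv_cj[of x P] assms unfolding NN_def by auto
qed

lemma coprime_action: assumes P: "Syl P" and u: "u \<in> carrier G" "u [^] m = \<one>" "cj G u P = P"
  and om: "\<forall>x\<in>Om 1 P. u \<otimes> x = x \<otimes> u"
  shows "\<forall>x\<in>P. u \<otimes> x = x \<otimes> u"
proof -
  interpret P: subgroup P G using P unfolding Syl_def by blast
  have Pc: "P \<subseteq> carrier G" using Syl_sub[OF P] .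
  have step: "\<forall>x\<in>P. x [^] (p ^ j) = \<one> \<longrightarrow> u \<otimes> x = x \<otimes> u" for j
  proof (induction j)
    case 0
    then show ?case using u by auto
  next
    case (Suc j)
    show ?case
    proof (intro ballI impI)
      fix x assume x: "x \<in> P" and xj: "x [^] (p ^ Suc j) = \<one>"
      have xc: "x \<in> carrier G" using x Pc by auto
      define y where "y = u \<otimes> x \<otimes> inv u"
      have yP: "y \<in> P" using u(3) cj_memI[OF x, of u] unfolding y_def by simp
      have yc: "y \<in> carrier G" using yP Pc by auto
      have xpP: "x [^] p \<in> P" using subgroup_pow_closed[OF _ x] P unfolding Syl_def by blast
      have "(x [^] p) [^] (p ^ j) = \<one>" using xj xc by (simp add: nat_pow_pow power_Suc)
      then have "u \<otimes> x [^] p = x [^] p \<otimes> u" using Suc.IH xpP by blast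
      then have yp: "y [^] p = x [^] p" unfolding y_def using cj_pow[OF u(1) xc, of p] u(1) xc
        by (simp add: m_assoc)
      define f where "f = y \<otimes> inv x"
      have fP: "f \<in> P" unfolding f_def using yP x by (simp add: P.m_closed P.m_inv_closed)
      have fc: "f \<in> carrier G" using fP Pc by auto
      have "f [^] p = y [^] p \<otimes> (inv x) [^] p"
        unfolding f_def using pow_mult_distrib[OF Syl_comm[OF P yP P.m_inv_closed[OF x]] yc] xc by simp
      also have "\<dots> = \<one>" using yp xc by (simp add: nat_pow_inv)
      finally have fp: "f [^] p = \<one>" .
      then have fO: "f \<in> Om 1 P" unfolding Om_def using fP by simp
      have uf: "u \<otimes> f = f \<otimes> u" using om fO by blast
      have yfx: "y = f \<otimes> x" unfolding f_def using yc xc by (simp add: m_assoc)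
      have it: "u [^] i \<otimes> x \<otimes> inv (u [^] i) = f [^] i \<otimes> x" for i :: nat
      proof (induction i)
        case 0 then show ?case using xc by simp
      next
        case (Suc i)
        have ufi: "u \<otimes> f [^] i = f [^] i \<otimes> u" using group_commutes_pow[OF uf[symmetric] fc u(1)] by simp
        have e1: "u [^] Suc i = u \<otimes> u [^] i" using u(1) nat_pow_Suc2 by blast
        have "u [^] Suc i \<otimes> x \<otimes> inv (u [^] Suc i) = (u \<otimes> u [^] i) \<otimes> x \<otimes> inv (u \<otimes> u [^] i)"
          by (simp only: e1)
        also have "\<dots> = u \<otimes> (u [^] i \<otimes> x \<otimes> inv (u [^] i)) \<otimes> inv u"
          using u(1) xc by (simp add: m_assoc inv_mult_group)
        also have "\<dots> = u \<otimes> (f [^] i \<otimes> x) \<otimes> inv u" using Suc.IH by simp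
        also have "\<dots> = f [^] i \<otimes> (u \<otimes> x \<otimes> inv u)" using ufi u(1) xc fc
          by (simp add: m_assoc[symmetric])
        also have "\<dots> = f [^] Suc i \<otimes> x" using yfx fc xc unfolding y_def[symmetric]
          by (simp add: m_assoc)
        finally show ?case .
      qed
      have "x = f [^] m \<otimes> x" using it[of m] u xc by simp
      then have fm: "f [^] m = \<one>" using xc fc by (metis l_one one_closed nat_pow_closed r_cancel)
      have "ord f dvd p" "ord f dvd m" using fp fm pow_eq_id[OF fc] by auto
      then have "ord f dvd gcd p m" by simp
      moreover have "gcd p m = 1" using prime_imp_coprime[OF pr nd] by simp
      ultimately have "ord f = 1" by simp
      then have "f = \<one>" using ord_eq_1[OF fc] by simp
      then have "y = x" using yfx xc by simp
      moreover have "u \<otimes> x = (u \<otimes> x \<otimes> inv u) \<otimes> u" using u(1) xc by (simp add: m_assoc)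
      ultimately show "u \<otimes> x = x \<otimes> u" unfolding y_def by simp
    qed
  qed
  show ?thesis
  proof
    fix x assume x: "x \<in> P"
    then show "u \<otimes> x = x \<otimes> u" using step[of r] Syl_pe[OF P x] by blast
  qed
qed

lemma cj_mono: "A \<subseteq> B \<Longrightarrow> cj G g A \<subseteq> cj G g B" unfolding cj_def by auto

lemma cj_centralizing: assumes h: "h \<in> centralizer_set G A" and A: "A \<subseteq> carrier G" shows "cj G h A = A"
proof -
  have hc: "h \<in> carrier G" using h unfolding centralizer_set_def by auto
  have "(\<lambda>x. h \<otimes> x \<otimes> inv h) ` A = (\<lambda>x. x) ` A"
  proof (rule image_cong[OF refl])
    fix x assume x: "x \<in> A"
    have "h \<otimes> x = x \<otimes> h" using h x unfolding centralizer_set_def by auto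
    then show "h \<otimes> x \<otimes> inv h = x" using hc x A by (simp add: m_assoc subsetD)
  qed
  then show ?thesis unfolding cj_def by simp
qed

lemma centralizer_cj_sub: assumes g: "g \<in> carrier G" and A: "A \<subseteq> carrier G"
  shows "cj G g (centralizer_set G A) \<subseteq> centralizer_set G (cj G g A)"
proof
  fix w assume "w \<in> cj G g (centralizer_set G A)"
  then obtain c where c: "c \<in> centralizer_set G A" "w = g \<otimes> c \<otimes> inv g" unfolding cj_def by auto
  have cc: "c \<in> carrier G" using c unfolding centralizer_set_def by auto
  show "w \<in> centralizer_set G (cj G g A)" unfolding centralizer_set_def
  proof (intro CollectI conjI ballI)
    show "w \<in> carrier G" using c cc g by simp
    fix q assume "q \<in> cj G g A"
    then obtain a where a: "a \<in> A" "q = g \<otimes> a \<otimes> inv g" unfolding cj_def by auto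
    have ac: "a \<in> carrier G" using a A by auto
    have ca: "c \<otimes> a = a \<otimes> c" using c a unfolding centralizer_set_def by auto
    have "w \<otimes> q = g \<otimes> (c \<otimes> a) \<otimes> inv g" using a c g cc ac by (simp add: m_assoc)
    also have "\<dots> = g \<otimes> (a \<otimes> c) \<otimes> inv g" using ca by simp
    also have "\<dots> = q \<otimes> w" using a c g cc ac by (simp add: m_assoc)
    finally show "w \<otimes> q = q \<otimes> w" .
  qed
qed

lemma centralizer_cj: assumes g: "g \<in> carrier G" and A: "A \<subseteq> carrier G"
  shows "centralizer_set G (cj G g A) = cj G g (centralizer_set G A)"
proof
  show "cj G g (centralizer_set G A) \<subseteq> centralizer_set G (cj G g A)" using centralizer_cj_sub[OF g A] .
  have cA: "cj G g A \<subseteq> carrier G" using cj_subset[OF g A] .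
  have Cs: "centralizer_set G (cj G g A) \<subseteq> carrier G" unfolding centralizer_set_def by auto
  have "cj G (inv g) (centralizer_set G (cj G g A)) \<subseteq> centralizer_set G (cj G (inv g) (cj G g A))"
    using centralizer_cj_sub[OF inv_closed[OF g] cA] .
  then have "cj G (inv g) (centralizer_set G (cj G g A)) \<subseteq> centralizer_set G A"
    using cj_inv_cj[OF g A] by simp
  then have "cj G g (cj G (inv g) (centralizer_set G (cj G g A))) \<subseteq> cj G g (centralizer_set G A)"
    by (rule cj_mono)
  then show "centralizer_set G (cj G g A) \<subseteq> cj G g (centralizer_set G A)"
    using cj_cj_inv[OF g Cs] by simp
qed

lemma psub_nontriv: assumes Q: "subgroup Q G" "card Q = p ^ n" "Q \<noteq> {\<one>}" shows "n \<ge> 1"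
proof (rule ccontr)
  assume "\<not> n \<ge> 1"
  then have "card Q = 1" using Q by simp
  then obtain a where "Q = {a}" using card_1_singletonE by blast
  moreover have "\<one> \<in> Q" using Q(1) subgroup.one_closed by blast
  ultimately show False using Q(3) by auto
qed

lemma Syl_contain: assumes Q: "subgroup Q G" "card Q = p ^ n" shows "\<exists>T. Syl T \<and> Q \<subseteq> T"
proof -
  obtain S where S: "Syl S" using Syl_exists by blast
  obtain g where g: "g \<in> carrier G" "Q \<subseteq> cj G g S"
    using contain_sub[OF subgroup_self S Syl_sub[OF S] Q(1) subgroup.subset[OF Q(1)] Q(2)] by blast
  then show ?thesis using Syl_cj[OF S g(1)] by blast
qed

lemma good_centralizer: assumes Q: "subgroup Q G" "card Q = p ^ n" "Q \<noteq> {\<one>}"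
  shows "good (centralizer_set G Q)"
proof -
  have Qc: "Q \<subseteq> carrier G" using Q(1) subgroup.subset by blast
  let ?H = "centralizer_set G Q"
  have H: "subgroup ?H G" using centralizer_subgroup[OF Qc] .
  interpret H: subgroup ?H G by fact
  have n1: "n \<ge> 1" using psub_nontriv[OF Q] .
  obtain T where T: "Syl T" "Q \<subseteq> T" using Syl_contain[OF Q(1,2)] by blast
  have TH: "T \<subseteq> ?H" unfolding centralizer_set_def using T Syl_sub[OF T(1)] Syl_comm[OF T(1)] by blast
  have QH: "Q \<subseteq> ?H" using T TH by blast
  have "NC ?H" unfolding NC_def
  proof (intro allI impI)
    fix P g assume P: "Syl P" and PH: "P \<subseteq> ?H" and g: "g \<in> ?H" and gP: "cj G g P = P"
    have Pc: "P \<subseteq> carrier G" using Syl_sub[OF P] .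
    have gc: "g \<in> carrier G" using g H.subset by auto
    obtain h where h: "h \<in> ?H" "Q \<subseteq> cj G h P" using contain_sub[OF H P PH Q(1) QH Q(2)] by blast
    have hc: "h \<in> carrier G" using h H.subset by auto
    have "cj G (inv h) Q \<subseteq> cj G (inv h) (cj G h P)" using cj_mono[OF h(2)] .
    moreover have "cj G (inv h) Q = Q"
    proof -
      have "cj G h Q = Q" using cj_centralizing[OF h(1) Qc] .
      then show ?thesis using cj_inv_cj[OF hc Qc] by simp
    qed
    ultimately have QP: "Q \<subseteq> P" using cj_inv_cj[OF hc Pc] by simp
    have QO: "Q = Om n P" using Om_sub_eq[OF P Q(1) QP Q(2)] by simp
    have O1: "Om 1 P \<subseteq> Q" using Om_mono[OF P n1] QO by simp
    have NP: "subgroup (NN P) G" using NN_subgroup[OF Pc] .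
    have gN: "g \<in> NN P" unfolding NN_def using gc gP by simp
    define u where "u = pq g"
    have uN: "u \<in> NN P" unfolding u_def using pq_sub[OF NP gN] .
    have uH: "u \<in> ?H" unfolding u_def using pq_sub[OF H g] .
    have uc: "u \<in> carrier G" using uH H.subset by auto
    have ucomm: "\<forall>x\<in>P. u \<otimes> x = x \<otimes> u"
    proof (rule coprime_action[OF P uc])
      show "u [^] m = \<one>" unfolding u_def using pq_m[OF gc] .
      show "cj G u P = P" using uN unfolding NN_def by simp
      show "\<forall>x\<in>Om 1 P. u \<otimes> x = x \<otimes> u" using uH O1 unfolding centralizer_set_def by auto
    qed
    define y where "y = pp g"
    have yN: "y \<in> NN P" unfolding y_def using pp_sub[OF NP gN] .
    have PN: "P \<subseteq> NN P" unfolding NN_def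
    proof
      fix x assume x: "x \<in> P"
      have xc: "x \<in> carrier G" using x Pc by auto
      have "x \<in> centralizer_set G P" unfolding centralizer_set_def using xc x Syl_comm[OF P] by auto
      then show "x \<in> {n \<in> carrier G. cj G n P = P}" using cj_centralizing[OF _ Pc] xc by auto
    qed
    obtain c where c: "c \<in> NN P" "y \<in> cj G c P"
      using pe_contain[OF NP P PN yN] pp_pe[OF gc] unfolding y_def by blast
    have yP: "y \<in> P" using c unfolding NN_def by simp
    show "\<forall>x\<in>P. g \<otimes> x = x \<otimes> g"
    proof
      fix x assume x: "x \<in> P"
      have xc: "x \<in> carrier G" using x Pc by auto
      have yc: "y \<in> carrier G" using yP Pc by auto
      have gyu: "g = y \<otimes> u" unfolding y_def u_def using pp_pq[OF gc] by simp
      have "g \<otimes> x = y \<otimes> (u \<otimes> x)" using gyu yc uc xc by (simp add: m_assoc)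
      also have "\<dots> = y \<otimes> x \<otimes> u" using ucomm x yc uc xc by (simp add: m_assoc)
      also have "\<dots> = x \<otimes> y \<otimes> u" using Syl_comm[OF P yP x] by simp
      also have "\<dots> = x \<otimes> g" using gyu yc uc xc by (simp add: m_assoc)
      finally show "g \<otimes> x = x \<otimes> g" .
    qed
  qed
  then show ?thesis unfolding good_def using H T TH by blast
qed

end



context cs begin

lemma KEY: assumes T: "Syl T" and y: "y \<in> T" "y [^] (p ^ (k - 1)) \<noteq> \<one>" and jk: "j \<le> k" and k: "k \<ge> 1"
  shows "Om j (generate G {y}) = Om j T"
proof -
  have Tc: "T \<subseteq> carrier G" using Syl_sub[OF T] .
  have yc: "y \<in> carrier G" using y Tc by auto
  have sT: "subgroup T G" using T unfolding Syl_def by auto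
  have sg: "subgroup (generate G {y}) G" using generate_is_subgroup yc by simp
  have gT: "generate G {y} \<subseteq> T" using generate_subgroup_incl[OF _ sT] y by simp
  have "ord y dvd p ^ r" using pow_eq_id[OF yc] Syl_pe[OF T y(1)] by simp
  then obtain a where a: "ord y = p ^ a" using divides_primepow_nat[OF pr] by blast
  have ka: "k \<le> a"
  proof (rule ccontr)
    assume "\<not> k \<le> a"
    then have "a \<le> k - 1" by simp
    then have "ord y dvd p ^ (k - 1)" using a by (simp add: le_imp_power_dvd)
    then show False using y(2) pow_eq_id[OF yc] by simp
  qed
  have cg: "card (generate G {y}) = p ^ a" using generate_pow_card[OF yc] a by simp
  have ge: "generate G {y} = Om a T" using Om_sub_eq(1)[OF T sg gT cg] .
  have "Om j T \<subseteq> Om a T" using Om_mono[OF T] jk ka by simp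
  then show ?thesis unfolding ge by (auto simp: Om_def)
qed

definition XX where "XX k = {x \<in> carrier G. pp x [^] (p ^ (k - 1)) \<noteq> \<one>}"
definition CJ where "CJ Q = (\<lambda>g. cj G g Q) ` carrier G"

lemma fiber_unique: assumes Q: "subgroup Q G" "card Q = p ^ j" and jk: "1 \<le> j" "j \<le> k"
  and x: "x \<in> XX k"
  shows "{Q' \<in> CJ Q. x \<in> centralizer_set G Q'} = {Om j (generate G {pp x})}"
proof -
  have xc: "x \<in> carrier G" and xk: "pp x [^] (p ^ (k - 1)) \<noteq> \<one>" using x unfolding XX_def by auto
  have k1: "k \<ge> 1" using jk by simp
  have Qc: "Q \<subseteq> carrier G" using Q(1) subgroup.subset by blast
  let ?y = "pp x"
  have yc: "?y \<in> carrier G" using xc by simp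
  let ?w = "Om j (generate G {?y})"
  have a: "Q' = ?w" if Q': "Q' \<in> CJ Q" "x \<in> centralizer_set G Q'" for Q'
  proof -
    obtain g where g: "g \<in> carrier G" "Q' = cj G g Q" using Q' unfolding CJ_def by auto
    have sQ': "subgroup Q' G" using subgroup_cj[OF Q(1) g(1)] g by simp
    have cQ': "card Q' = p ^ j" using card_cj[OF g(1) Qc] g Q by simp
    have Q'c: "Q' \<subseteq> carrier G" using sQ' subgroup.subset by blast
    let ?H = "centralizer_set G Q'"
    have H: "subgroup ?H G" using centralizer_subgroup[OF Q'c] .
    obtain T0 where T0: "Syl T0" "Q' \<subseteq> T0" using Syl_contain[OF sQ' cQ'] by blast
    have T0H: "T0 \<subseteq> ?H" unfolding centralizer_set_def using T0 Syl_sub[OF T0(1)] Syl_comm[OF T0(1)] by blast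
    have yH: "?y \<in> ?H" using pp_sub[OF H Q'(2)] .
    obtain h where h: "h \<in> ?H" "?y \<in> cj G h T0"
      using pe_contain[OF H T0(1) T0H yH pp_pe[OF xc]] by blast
    have hc: "h \<in> carrier G" using h unfolding centralizer_set_def by auto
    have T1: "Syl (cj G h T0)" using Syl_cj[OF T0(1) hc] .
    have "cj G h Q' \<subseteq> cj G h T0" using cj_mono[OF T0(2)] .
    then have Q'T1: "Q' \<subseteq> cj G h T0" using cj_centralizing[OF h(1) Q'c] by simp
    have "Q' = Om j (cj G h T0)" using Om_sub_eq(1)[OF T1 sQ' Q'T1 cQ'] .
    also have "\<dots> = ?w" using KEY[OF T1 h(2) xk jk(2) k1] by simp
    finally show ?thesis .
  qed
  have b: "?w \<in> CJ Q \<and> x \<in> centralizer_set G ?w"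
  proof
    obtain S0 where S0: "Syl S0" using Syl_exists by blast
    obtain h where h: "h \<in> carrier G" "?y \<in> cj G h S0"
      using pe_contain[OF subgroup_self S0 Syl_sub[OF S0] yc pp_pe[OF xc]] by blast
    have T: "Syl (cj G h S0)" using Syl_cj[OF S0 h(1)] .
    have wT: "?w = Om j (cj G h S0)" using KEY[OF T h(2) xk jk(2) k1] .
    obtain c where c: "c \<in> carrier G" "Q \<subseteq> cj G c (cj G h S0)"
      using contain_sub[OF subgroup_self T Syl_sub[OF T] Q(1) Qc Q(2)] by blast
    have T': "Syl (cj G c (cj G h S0))" using Syl_cj[OF T c(1)] .
    have QO: "Q = Om j (cj G c (cj G h S0))" using Om_sub_eq(1)[OF T' Q(1) c(2) Q(2)] .
    have "cj G (inv c) Q = Om j (cj G (inv c) (cj G c (cj G h S0)))"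
      unfolding QO using cj_Om[OF T' inv_closed[OF c(1)]] .
    also have "\<dots> = ?w" using cj_inv_cj[OF c(1) Syl_sub[OF T]] wT by simp
    finally show "?w \<in> CJ Q" unfolding CJ_def using c(1) by force
    show "x \<in> centralizer_set G ?w" unfolding centralizer_set_def
    proof (intro CollectI conjI ballI)
      show "x \<in> carrier G" using xc .
      fix z assume "z \<in> ?w"
      then have "z \<in> generate G {?y}" unfolding Om_def by auto
      then obtain i where i: "z = ?y [^] (i::nat)" using generate_pow_on_finite_carrier[OF fin yc] by auto
      have "?y \<otimes> x = x \<otimes> ?y" using pp_comm[OF xc xc refl] .
      then have "?y [^] i \<otimes> x = x \<otimes> ?y [^] i" using group_commutes_pow[OF _ yc xc] by blast
      then show "x \<otimes> z = z \<otimes> x" using i by simp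
    qed
  qed
  show ?thesis using a b by blast
qed

lemma fiberB: assumes Q: "subgroup Q G" "card Q = p ^ j" and jk: "1 \<le> j" "j \<le> k"
  shows "card (XX k) = (\<Sum>Q'\<in>CJ Q. card {x\<in>centralizer_set G Q'. pp x [^] (p ^ (k - 1)) \<noteq> \<one>})"
proof -
  have fX: "finite (XX k)" unfolding XX_def using fin by simp
  have fC: "finite (CJ Q)" unfolding CJ_def using fin by simp
  have "(\<Sum>Q'\<in>CJ Q. card {x\<in>centralizer_set G Q'. pp x [^] (p ^ (k - 1)) \<noteq> \<one>})
      = (\<Sum>Q'\<in>CJ Q. card {x\<in>XX k. x \<in> centralizer_set G Q'})"
    by (rule sum.cong[OF refl], rule arg_cong[where f = card]) (auto simp: XX_def centralizer_set_def)
  also have "\<dots> = (\<Sum>x\<in>XX k. card {Q'\<in>CJ Q. x \<in> centralizer_set G Q'})"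
    by (rule sum_card_swap[OF fC fX])
  also have "\<dots> = (\<Sum>x\<in>XX k. 1)"
    by (rule sum.cong[OF refl]) (simp add: fiber_unique[OF Q jk])
  finally show ?thesis by simp
qed

lemma orbit_count: assumes Qc: "Q \<subseteq> carrier G" shows "card (CJ Q) * card (normalizer G Q) = order G"
proof -
  interpret A: group_action G "{H. H \<subseteq> carrier G}" "\<lambda>g. \<lambda>H\<in>{H. H \<subseteq> carrier G}. g <# H #> inv g"
    by (rule action_by_conjugation_on_power_set)
  have o: "orbit G (\<lambda>g. \<lambda>H\<in>{H. H \<subseteq> carrier G}. g <# H #> inv g) Q = CJ Q"
  proof -
    have "g <# Q #> inv g = cj G g Q" if "g \<in> carrier G" for g
      unfolding l_coset_def r_coset_def cj_def by auto
    then show ?thesis unfolding orbit_def CJ_def using Qc by auto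
  qed
  show ?thesis using A.orbit_stabilizer_theorem[of Q] Qc o unfolding normalizer_def by simp
qed

lemma count_main: assumes Q: "subgroup Q G" "card Q = p ^ j" and jk: "1 \<le> j" "j \<le> k" "k \<le> r"
  shows "card (XX k) * p ^ r * card (normalizer G Q)
       = order G * card (centralizer_set G Q) * (p ^ r - p ^ (k - 1))"
proof -
  have Qc: "Q \<subseteq> carrier G" using Q(1) subgroup.subset by blast
  have "card (XX k) * p ^ r
      = (\<Sum>Q'\<in>CJ Q. card {x\<in>centralizer_set G Q'. pp x [^] (p ^ (k - 1)) \<noteq> \<one>} * p ^ r)"
    using fiberB[OF Q jk(1,2)] by (simp add: sum_distrib_right)
  also have "\<dots> = (\<Sum>Q'\<in>CJ Q. card (centralizer_set G Q) * (p ^ r - p ^ (k - 1)))"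
  proof (rule sum.cong[OF refl])
    fix Q' assume "Q' \<in> CJ Q"
    then obtain g where g: "g \<in> carrier G" "Q' = cj G g Q" unfolding CJ_def by auto
    have sQ': "subgroup Q' G" using subgroup_cj[OF Q(1) g(1)] g by simp
    have cQ': "card Q' = p ^ j" using card_cj[OF g(1) Qc] g Q by simp
    have nt: "Q' \<noteq> {\<one>}"
    proof
      assume "Q' = {\<one>}"
      then have "p ^ j = 1" using cQ' by simp
      then show False using jk(1) p_gt1 by simp
    qed
    have gd: "good (centralizer_set G Q')" using good_centralizer[OF sQ' cQ' nt] .
    have "card (centralizer_set G Q') = card (centralizer_set G Q)"
      using g centralizer_cj[OF g(1) Qc] card_cj[OF g(1)] by (simp add: centralizer_set_def)
    then show "card {x\<in>centralizer_set G Q'. pp x [^] (p ^ (k - 1)) \<noteq> \<one>} * p ^ r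
        = card (centralizer_set G Q) * (p ^ r - p ^ (k - 1))"
      using lemmaA2[OF gd, of k] jk by simp
  qed
  also have "\<dots> = card (CJ Q) * (card (centralizer_set G Q) * (p ^ r - p ^ (k - 1)))" by simp
  finally have "card (XX k) * p ^ r * card (normalizer G Q)
      = (card (CJ Q) * card (normalizer G Q)) * (card (centralizer_set G Q) * (p ^ r - p ^ (k - 1)))"
    by (simp add: mult_ac)
  then show ?thesis unfolding orbit_count[OF Qc] by (simp only: mult.assoc)
qed

end



lemma real_alg:
  fixes A B g Ca Na Cb Nb P D Dn q s :: real
  assumes eqk: "A * P * Na = g * Ca * D" and eqna: "B * P * Na = g * Ca * Dn"
    and eqnb: "B * P * Nb = g * Cb * Dn"
    and pos: "g > 0" "Dn > 0" "Na > 0" "Nb > 0" "P > 0" "q > 0"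
    and D: "D = P - s" and Pq: "P = q * s"
  shows "A = (q - 1) / q * (g * Cb / Nb)"
proof -
  have "g * Ca * Dn * Nb = g * Cb * Dn * Na" using eqna eqnb
    by (metis mult.commute mult.left_commute)
  then have CN: "Ca * Nb = Cb * Na" using pos by simp
  have s0: "s > 0" using Pq pos by (metis zero_less_mult_pos)
  have "A = g * Ca * D / (P * Na)" using eqk pos by (simp add: field_simps)
  also have "\<dots> = g * (Ca * Nb) * D / (P * Na * Nb)" using pos by (simp add: field_simps)
  also have "\<dots> = g * Cb * D / (P * Nb)" using CN pos by (simp add: field_simps)
  also have "\<dots> = (q - 1) / q * (g * Cb / Nb)" unfolding D Pq using pos s0 by (simp add: field_simps)
  finally show ?thesis .
qed

theorem proposition5p10:
  fixes G :: "('a, 'b) monoid_scheme" and p r :: nat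
  assumes "group G" and "finite (carrier G)" and "Factorial_Ring.prime p" and "r \<ge> 1"
    and "\<forall>P. sylow_subgroup G p P \<longrightarrow>
           cyclic_group (G\<lparr>carrier := P\<rparr>) \<and> card P = p ^ r"
  shows "(\<forall>k Q. 1 \<le> k \<and> k \<le> r \<and> p_subgroup G p Q \<and> Q \<noteq> {\<one>\<^bsub>G\<^esub>} \<longrightarrow>
            real (elems_order_div G p k) =
              (real p ^ (r - k + 1) - 1) / real p ^ (r - k + 1) *
              (real (order G) * real (card (centralizer_set G Q)) / real (card (normalizer G Q))))
       \<and> elems_order_div G p 0 = order G
       \<and> (\<forall>k. k > r \<longrightarrow> elems_order_div G p k = 0)"
proof -
  interpret group G by fact
  have fin: "finite (carrier G)" and pr: "Factorial_Ring.prime p" and r1: "r \<ge> 1" using assms by auto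
  have p1: "p > 1" using pr prime_gt_1_nat by blast
  define a where "a = multiplicity p (order G)"
  define m where "m = order G div p ^ a"
  have o0: "order G \<noteq> 0" using fin by (simp add: order_gt_0_iff_finite)
  have nd: "\<not> p dvd m" unfolding m_def a_def using multiplicity_decompose[OF o0] pr not_prime_unit by blast
  have oG0: "order G = p ^ a * m" unfolding m_def a_def by (simp add: multiplicity_dvd)
  obtain P0 where P0: "subgroup P0 G" "card P0 = p ^ a" using sylow_thm[OF pr assms(1) oG0 fin] by blast
  have "sylow_subgroup G p P0" unfolding sylow_subgroup_def using P0 a_def by simp
  then have "card P0 = p ^ r" using assms(5) by blast
  then have ar: "a = r" using P0 p1 by (simp add: power_inject_exp)
  have oG: "order G = p ^ r * m" using oG0 ar by simp
  interpret cs G p r m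
  proof
    show "finite (carrier G)" by fact
    show "Factorial_Ring.prime p" by fact
    show "order G = p ^ r * m" by fact
    show "\<not> p dvd m" by fact
    fix P assume "subgroup P G" "card P = p ^ r"
    then have "sylow_subgroup G p P" unfolding sylow_subgroup_def using ar a_def by simp
    then show "cyclic_group (G\<lparr>carrier := P\<rparr>)" using assms(5) by blast
  qed
  have conv: "elems_order_div G p k = card (XX k)" if k: "k \<ge> 1" for k
  proof -
    have "{x \<in> carrier G. p ^ k dvd ord x} = XX k"
      unfolding XX_def using ord_char[OF _ k] by auto
    then show ?thesis unfolding elems_order_div_def by simp
  qed
  have main: "real (elems_order_div G p k) =
              (real p ^ (r - k + 1) - 1) / real p ^ (r - k + 1) *
              (real (order G) * real (card (centralizer_set G Q)) / real (card (normalizer G Q)))"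
    if k: "1 \<le> k" "k \<le> r" and Q: "p_subgroup G p Q" "Q \<noteq> {\<one>\<^bsub>G\<^esub>}" for k Q
  proof -
    obtain n where sQ: "subgroup Q G" and cQ: "card Q = p ^ n" using Q unfolding p_subgroup_def by blast
    have n1: "n \<ge> 1" using psub_nontriv[OF sQ cQ Q(2)] .
    obtain T where T: "Syl T" "Q \<subseteq> T" using Syl_contain[OF sQ cQ] by blast
    have nr: "n \<le> r" using Om_sub_eq(2)[OF T(1) sQ T(2) cQ] .
    define W where "W = Om 1 T"
    have sW: "subgroup W G" unfolding W_def using Om_subgroup[OF T(1)] .
    have cW: "card W = p ^ 1" unfolding W_def using card_Om[OF T(1)] r1 by simp
    have Wc: "W \<subseteq> carrier G" using sW subgroup.subset by blast
    have Qc: "Q \<subseteq> carrier G" using sQ subgroup.subset by blast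
    have e1: "card (XX k) * p ^ r * card (normalizer G W) = order G * card (centralizer_set G W) * (p ^ r - p ^ (k - 1))"
      using count_main[OF sW cW _ k(1) k(2)] by simp
    have e2: "card (XX n) * p ^ r * card (normalizer G W) = order G * card (centralizer_set G W) * (p ^ r - p ^ (n - 1))"
      using count_main[OF sW cW _ n1 nr] by simp
    have e3: "card (XX n) * p ^ r * card (normalizer G Q) = order G * card (centralizer_set G Q) * (p ^ r - p ^ (n - 1))"
      using count_main[OF sQ cQ n1 order_refl nr] .
    have Npos: "card (normalizer G A) > 0" if "A \<subseteq> carrier G" for A
    proof -
      have "subgroup (normalizer G A) G" using normalizer_imp_subgroup[OF that] .
      then show ?thesis using fin subgroup.finite_imp_card_positive by blast
    qed
    have le1: "p ^ (k - 1) \<le> p ^ r" using k p1 by (simp add: power_increasing)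
    have lt2: "p ^ (n - 1) < p ^ r" using n1 nr p1 by (simp add: power_strict_increasing)
    have Pq: "real (p ^ r) = real p ^ (r - k + 1) * real (p ^ (k - 1))"
    proof -
      have "r = (r - k + 1) + (k - 1)" using k by simp
      then have "p ^ r = p ^ (r - k + 1) * p ^ (k - 1)" by (metis power_add)
      then show ?thesis by (metis of_nat_mult of_nat_power)
    qed
    have "real (card (XX k)) = (real p ^ (r - k + 1) - 1) / real p ^ (r - k + 1) *
              (real (order G) * real (card (centralizer_set G Q)) / real (card (normalizer G Q)))"
    proof (rule real_alg[where B = "real (card (XX n))" and Ca = "real (card (centralizer_set G W))"
          and Na = "real (card (normalizer G W))" and P = "real (p ^ r)" and D = "real (p ^ r - p ^ (k - 1))"
          and Dn = "real (p ^ r - p ^ (n - 1))" and s = "real (p ^ (k - 1))"])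
      show "real (card (XX k)) * real (p ^ r) * real (card (normalizer G W)) =
        real (order G) * real (card (centralizer_set G W)) * real (p ^ r - p ^ (k - 1))"
        using arg_cong[OF e1, of real] by simp
      show "real (card (XX n)) * real (p ^ r) * real (card (normalizer G W)) =
        real (order G) * real (card (centralizer_set G W)) * real (p ^ r - p ^ (n - 1))"
        using arg_cong[OF e2, of real] by simp
      show "real (card (XX n)) * real (p ^ r) * real (card (normalizer G Q)) =
        real (order G) * real (card (centralizer_set G Q)) * real (p ^ r - p ^ (n - 1))"
        using arg_cong[OF e3, of real] by simp
      show "real (order G) > 0" using o0 by simp
      have "p ^ r - p ^ (n - 1) > 0" using lt2 by simp
      then show "real (p ^ r - p ^ (n - 1)) > 0" by (simp only: of_nat_0_less_iff)
      show "real (card (normalizer G W)) > 0" using Npos[OF Wc] by simp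
      show "real (card (normalizer G Q)) > 0" using Npos[OF Qc] by simp
      show "real (p ^ r) > 0" using p1 by simp
      show "real p ^ (r - k + 1) > 0" using p1 by simp
      show "real (p ^ r - p ^ (k - 1)) = real (p ^ r) - real (p ^ (k - 1))" using le1 by (simp add: of_nat_diff)
      show "real (p ^ r) = real p ^ (r - k + 1) * real (p ^ (k - 1))" by (rule Pq)
    qed
    then show ?thesis using conv[OF k(1)] by simp
  qed
  have z: "elems_order_div G p 0 = order G"
    unfolding elems_order_div_def order_def by simp
  have big: "elems_order_div G p k = 0" if k: "k > r" for k
  proof -
    have "{x \<in> carrier G. p ^ k dvd ord x} = {}"
    proof (rule ccontr)
      assume "{x \<in> carrier G. p ^ k dvd ord x} \<noteq> {}"
      then obtain x where x: "x \<in> carrier G" "p ^ k dvd ord x" by auto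
      have "ord x dvd p ^ r * m" using ord_dvd_group_order[OF x(1)] oG by simp
      then have "p ^ k dvd p ^ r * m" using x(2) dvd_trans by blast
      then have "k \<le> r" using pow_dvd_aux[OF pr nd] by blast
      then show False using k by simp
    qed
    then show ?thesis unfolding elems_order_div_def by (simp only: card.empty)
  qed
  show ?thesis using main z big by blast
qed



end
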